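(* Let $S\subset\mathbb R^2$ be a finite set of $n>4$ points, none of which lies at the center $O$ of SED$(S)$. If $S$ is Pre-regular, then $S$ is not a Half-disk set.
   Context: SED$(S)$ is the smallest closed disk containing $S$, SEC$(S)$ its boundary circle, and $O$ its center. $S$ is \emph{Pre-regular} if there is a regular $n$-gon $P$ (the supporting polygon) such that for every pair of adjacent edges of $P$, one of the two edges contains exactly two points of $S$ (possibly at its endpoints) and the relative interior of the other edge contains no point of $S$. $S$ is a \emph{Half-disk} set if there is a line $\ell$ through $O$ such that exactly one of the two open half-planes bounded by $\ell$ contains no point of $S$. *)

theory Defs
  imports "HOL-Analysis.Analysis"
begin

definition is_SED :: "complex set \<Rightarrow> complex \<Rightarrow> real \<Rightarrow> bool" where
  "is_SED S z0 r \<longleftrightarrow> S \<subseteq> cball z0 r \<and> (\<forall>c' r'. S \<subseteq> cball c' r' \<longrightarrow> r \<le> r')"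

definition reg_vertex :: "nat \<Rightarrow> complex \<Rightarrow> real \<Rightarrow> real \<Rightarrow> nat \<Rightarrow> complex" where
  "reg_vertex m c r th k = c + of_real r * cis (th + 2 * pi * real k / real m)"

definition reg_edge :: "nat \<Rightarrow> complex \<Rightarrow> real \<Rightarrow> real \<Rightarrow> nat \<Rightarrow> complex set" where
  "reg_edge m c r th k = closed_segment (reg_vertex m c r th k) (reg_vertex m c r th (Suc k))"

definition reg_edge_int :: "nat \<Rightarrow> complex \<Rightarrow> real \<Rightarrow> real \<Rightarrow> nat \<Rightarrow> complex set" where
  "reg_edge_int m c r th k = open_segment (reg_vertex m c r th k) (reg_vertex m c r th (Suc k))"

definition pre_regular :: "complex set \<Rightarrow> bool" where
  "pre_regular S \<longleftrightarrow> (let n = card S in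
     \<exists>c r th. r > 0 \<and>
       (\<forall>k < n. let e1 = k; e2 = Suc k mod n in
          (card (S \<inter> reg_edge n c r th e1) = 2 \<and> S \<inter> reg_edge_int n c r th e2 = {}) \<or>
          (card (S \<inter> reg_edge n c r th e2) = 2 \<and> S \<inter> reg_edge_int n c r th e1 = {})))"

definition half_disk :: "complex set \<Rightarrow> complex \<Rightarrow> bool" where
  "half_disk S z0 \<longleftrightarrow> (\<exists>u. u \<noteq> 0 \<and>
     ((S \<inter> {x. inner (x - z0) u > 0} = {}) \<noteq> (S \<inter> {x. inner (x - z0) u < 0} = {})))"

end

theory Submission
  imports Defs
begin


definition Wv :: "nat \<Rightarrow> complex \<Rightarrow> real \<Rightarrow> real \<Rightarrow> int \<Rightarrow> complex" where
  "Wv n c \<rho> th k = c + complex_of_real \<rho> * cis (th + 2*pi*real_of_int k / real n)"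

definition cr :: "complex \<Rightarrow> complex \<Rightarrow> real" where "cr x y = Im (cnj x * y)"

lemma cr_add2: "cr x (y + z) = cr x y + cr x z" by (simp add: cr_def algebra_simps)
lemma cr_diff2: "cr x (y - z) = cr x y - cr x z" by (simp add: cr_def algebra_simps)
lemma cr_scale2: "cr x (of_real a * y) = a * cr x y" by (simp add: cr_def algebra_simps)
lemma cr_self: "cr x (of_real a * x) = 0"
  by (simp add: cr_def algebra_simps)
lemma cr_expand: "cr x y = Re x * Im y - Im x * Re y" by (simp add: cr_def)

lemma cis_period_int: "cis (x + 2*pi*real_of_int z) = cis x"
proof -
  have "cis (x + 2*pi*real_of_int z) = cis x * cis (2*pi*real_of_int z)" by (rule cis_mult[symmetric])
  also have "cis (2*pi*real_of_int z) = 1" by (rule cis_multiple_2pi) simp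
  finally show ?thesis by simp
qed

lemma W_period:
  assumes "n > 0" shows "Wv n c \<rho> th (k + int n * z) = Wv n c \<rho> th k"
proof -
  have e: "th + 2*pi*real_of_int (k + int n * z) / real n = (th + 2*pi*real_of_int k / real n) + 2*pi*real_of_int z"
    using assms by (simp add: field_simps)
  show ?thesis unfolding Wv_def by (simp only: e cis_period_int)
qed

lemma W_mod:
  assumes "n > 0" shows "Wv n c \<rho> th (k mod int n) = Wv n c \<rho> th k"
proof -
  have "k = k mod int n + int n * (k div int n)" by simp
  then have "Wv n c \<rho> th k = Wv n c \<rho> th (k mod int n + int n * (k div int n))" by simp
  also have "\<dots> = Wv n c \<rho> th (k mod int n)" using W_period[OF assms] by blast
  finally show ?thesis by simp
qed

lemma W_diff_formula:
  "Wv n c \<rho> th (k+1) - Wv n c \<rho> th k = complex_of_real \<rho> * cis (th + 2*pi*real_of_int k / real n) * (cis (2*pi/real n) - 1)"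
proof -
  have "th + 2*pi*real_of_int (k+1) / real n = (th + 2*pi*real_of_int k / real n) + 2*pi/real n"
    by (simp add: add_divide_distrib algebra_simps)
  then show ?thesis unfolding Wv_def by (simp add: cis_mult[symmetric] algebra_simps)
qed

lemma d_rot:
  "Wv n c \<rho> th (k+j+1) - Wv n c \<rho> th (k+j) = cis (2*pi*real_of_int j/real n) * (Wv n c \<rho> th (k+1) - Wv n c \<rho> th k)"
proof -
  have e: "th + 2*pi*real_of_int (k+j) / real n = (th + 2*pi*real_of_int k / real n) + 2*pi*real_of_int j/real n"
    by (simp add: add_divide_distrib algebra_simps)
  have "Wv n c \<rho> th (k+j+1) - Wv n c \<rho> th (k+j) = complex_of_real \<rho> * cis (th + 2*pi*real_of_int (k+j) / real n) * (cis (2*pi/real n) - 1)"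
    by (rule W_diff_formula)
  also have "\<dots> = complex_of_real \<rho> * (cis (th + 2*pi*real_of_int k / real n) * cis (2*pi*real_of_int j/real n)) * (cis (2*pi/real n) - 1)"
    by (simp only: e cis_mult)
  also have "\<dots> = cis (2*pi*real_of_int j/real n) * (complex_of_real \<rho> * cis (th + 2*pi*real_of_int k / real n) * (cis (2*pi/real n) - 1))"
    by (simp only: mult_ac)
  also have "\<dots> = cis (2*pi*real_of_int j/real n) * (Wv n c \<rho> th (k+1) - Wv n c \<rho> th k)"
    by (simp only: W_diff_formula)
  finally show ?thesis .
qed

lemma sin_id3: "sin (2*y) + sin (2*x) - sin (2*x + 2*y) = 4 * sin x * sin y * sin (x+y::real)"
proof -
  have px: "sin x ^ 2 + cos x ^ 2 = 1" and py: "sin y ^ 2 + cos y ^ 2 = 1" by simp_all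
  have "sin (2*y) + sin (2*x) - sin (2*x + 2*y) - 4 * sin x * sin y * sin (x+y)
      = 2 * sin x * cos x * (1 - (sin y ^ 2 + cos y ^ 2)) + 2 * sin y * cos y * (1 - (sin x ^ 2 + cos x ^ 2))"
  proof -
    have a1: "sin (2*x) = 2 * sin x * cos x" "sin (2*y) = 2 * sin y * cos y" by (rule sin_double)+
    have a2: "cos (2*x) = cos x ^ 2 - sin x ^ 2" "cos (2*y) = cos y ^ 2 - sin y ^ 2" by (rule cos_double)+
    have a3: "sin (2*x + 2*y) = sin (2*x) * cos (2*y) + cos (2*x) * sin (2*y)" by (rule sin_add)
    have a4: "sin (x+y) = sin x * cos y + cos x * sin y" by (rule sin_add)
    show ?thesis unfolding a3 a4 a1 a2 by algebra
  qed
  also have "\<dots> = 0" by (simp add: px py)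
  finally show ?thesis by simp
qed

lemma cross_trig: "(cos A - cos B)*(sin C - sin B) - (sin A - sin B)*(cos C - cos B) = sin (C - A) + sin (A - B) - sin (C - B::real)"
  unfolding sin_diff by algebra

lemma area:
  "cr (Wv n c \<rho> th (a+s) - Wv n c \<rho> th a) (Wv n c \<rho> th (a+t) - Wv n c \<rho> th a)
     = 4*\<rho>^2 * sin (pi*real_of_int s/real n) * sin (pi*real_of_int (t-s)/real n) * sin (pi*real_of_int t/real n)"
proof -
  define B where "B = th + 2*pi*real_of_int a/real n"
  define X where "X = pi*real_of_int s/real n"
  define Y where "Y = pi*real_of_int (t-s)/real n"
  have XY: "X + Y = pi*real_of_int t/real n" unfolding X_def Y_def by (simp add: add_divide_distrib[symmetric] algebra_simps)
  have hA: "th + 2*pi*real_of_int (a+s)/real n = B + 2*X" unfolding B_def X_def by (simp add: add_divide_distrib algebra_simps)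
  have hC: "th + 2*pi*real_of_int (a+t)/real n = B + 2*X + 2*Y"
  proof -
    have "th + 2*pi*real_of_int (a+t)/real n = B + 2*(X+Y)" unfolding B_def XY by (simp add: add_divide_distrib algebra_simps)
    then show ?thesis by simp
  qed
  have "cr (Wv n c \<rho> th (a+s) - Wv n c \<rho> th a) (Wv n c \<rho> th (a+t) - Wv n c \<rho> th a)
     = \<rho>^2 * ((cos (B+2*X) - cos B)*(sin (B+2*X+2*Y) - sin B) - (sin (B+2*X) - sin B)*(cos (B+2*X+2*Y) - cos B))"
    unfolding Wv_def hA hC B_def[symmetric] cr_expand by (simp add: cis.sel power2_eq_square algebra_simps)
  also have "\<dots> = \<rho>^2 * (sin (2*Y) + sin (2*X) - sin (2*X + 2*Y))"
    unfolding cross_trig by (simp add: algebra_simps)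
  also have "\<dots> = \<rho>^2 * (4 * sin X * sin Y * sin (X+Y))" by (simp only: sin_id3)
  finally show ?thesis unfolding XY by (simp add: X_def Y_def algebra_simps)
qed



lemma seg_param: "x \<in> closed_segment a b \<longleftrightarrow> (\<exists>t. 0 \<le> t \<and> t \<le> 1 \<and> x = a + complex_of_real t * (b - a))"
  unfolding in_segment scaleR_conv_of_real by (auto simp: algebra_simps)

lemma oseg_param: "x \<in> open_segment a b \<longleftrightarrow> a \<noteq> b \<and> (\<exists>t. 0 < t \<and> t < 1 \<and> x = a + complex_of_real t * (b - a))"
  unfolding in_segment scaleR_conv_of_real by (auto simp: algebra_simps)

lemma cr_comb: "cr v (a + complex_of_real t * (b - a) - w) = (1 - t) * cr v (a - w) + t * cr v (b - w)"
proof -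
  have "a + complex_of_real t * (b - a) - w = (a - w) + complex_of_real t * ((b - w) - (a - w))" by (simp add: algebra_simps)
  then have "cr v (a + complex_of_real t * (b - a) - w) = cr v (a - w) + t * (cr v (b - w) - cr v (a - w))"
    by (simp only: cr_add2 cr_diff2 cr_scale2)
  then show ?thesis by (simp add: algebra_simps)
qed

lemma mod_cases_int:
  fixes s m :: int assumes "m > 0"
  shows "(s + 1) mod m = (if s mod m + 1 = m then 0 else s mod m + 1)"
proof -
  have "(s + 1) mod m = (s mod m + 1) mod m" by (simp add: mod_add_left_eq)
  moreover have "0 \<le> s mod m" "s mod m < m" using assms by simp_all
  ultimately show ?thesis by (auto simp: mod_pos_pos_trivial)
qed

locale prp =
  fixes n :: nat and c :: complex and \<rho> :: real and th :: real and S :: "complex set"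
  assumes n5: "n \<ge> 5" and rho: "\<rho> > 0" and finS: "finite S" and cardS: "card S = n"
  and pair: "\<And>k. (card (S \<inter> closed_segment (Wv n c \<rho> th k) (Wv n c \<rho> th (k+1))) = 2 \<and>
                     S \<inter> open_segment (Wv n c \<rho> th (k+1)) (Wv n c \<rho> th (k+1+1)) = {}) \<or>
                  (card (S \<inter> closed_segment (Wv n c \<rho> th (k+1)) (Wv n c \<rho> th (k+1+1))) = 2 \<and>
                     S \<inter> open_segment (Wv n c \<rho> th k) (Wv n c \<rho> th (k+1)) = {})"
begin

abbreviation W where "W \<equiv> Wv n c \<rho> th"
abbreviation d where "d k \<equiv> W (k+1) - W k"
abbreviation E where "E k \<equiv> closed_segment (W k) (W (k+1))"
abbreviation I where "I k \<equiv> open_segment (W k) (W (k+1))"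

lemma npos: "n > 0" using n5 by simp
lemma nint: "int n \<ge> 5" using n5 by simp

lemma W_modeq: "a mod int n = b mod int n \<Longrightarrow> W a = W b"
  by (metis W_mod npos)

lemma sin_pos_frac: "0 < s \<Longrightarrow> s < int n \<Longrightarrow> sin (pi * real_of_int s / real n) > 0"
  apply (rule sin_gt_zero)
  using npos by (auto simp: field_simps)

lemma sin_nonneg_frac: "0 \<le> s \<Longrightarrow> s \<le> int n \<Longrightarrow> sin (pi * real_of_int s / real n) \<ge> 0"
  apply (rule sin_ge_zero)
  using npos by (auto simp: field_simps)

lemma supp_gen:
  shows "cr (d k) (W j - W k) \<ge> 0"
    and "(j - k) mod int n \<noteq> 0 \<Longrightarrow> (j - k) mod int n \<noteq> 1 \<Longrightarrow> cr (d k) (W j - W k) > 0"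
proof -
  define s where "s = (j - k) mod int n"
  have s0: "0 \<le> s" "s < int n" using npos by (simp_all add: s_def)
  have Wj: "W j = W (k + s)" by (rule W_modeq) (simp add: s_def mod_add_right_eq)
  have A: "cr (d k) (W j - W k) = 4*\<rho>^2 * sin (pi*real_of_int 1/real n) * sin (pi*real_of_int (s-1)/real n) * sin (pi*real_of_int s/real n)"
    unfolding Wj using area[of n c \<rho> th k 1 s] by simp
  have p1: "sin (pi*real_of_int 1/real n) > 0" by (rule sin_pos_frac) (use nint in auto)
  show "cr (d k) (W j - W k) \<ge> 0"
  proof (cases "s = 0")
    case True then show ?thesis unfolding A by simp
  next
    case False
    then have "sin (pi*real_of_int (s-1)/real n) \<ge> 0" "sin (pi*real_of_int s/real n) \<ge> 0"
      using s0 sin_nonneg_frac[of "s-1"] sin_nonneg_frac[of s] by auto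
    then show ?thesis unfolding A using p1 rho by (auto intro!: mult_nonneg_nonneg)
  qed
  assume "(j - k) mod int n \<noteq> 0" "(j - k) mod int n \<noteq> 1"
  then have "s \<ge> 2" using s0 unfolding s_def by linarith
  then have "sin (pi*real_of_int (s-1)/real n) > 0" "sin (pi*real_of_int s/real n) > 0"
    using s0 sin_pos_frac[of "s-1"] sin_pos_frac[of s] by auto
  then show "cr (d k) (W j - W k) > 0" unfolding A using p1 rho by (auto intro!: mult_pos_pos)
qed

lemma edge_param: "x \<in> E k \<longleftrightarrow> (\<exists>t. 0 \<le> t \<and> t \<le> 1 \<and> x = W k + complex_of_real t * d k)"
  by (rule seg_param)

lemma supp_edge: "x \<in> E j \<Longrightarrow> cr (d k) (x - W k) \<ge> 0"
proof -
  assume "x \<in> E j"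
  then obtain t where t: "0 \<le> t" "t \<le> 1" "x = W j + complex_of_real t * d j" by (auto simp: edge_param)
  have "cr (d k) (x - W k) = (1 - t) * cr (d k) (W j - W k) + t * cr (d k) (W (j+1) - W k)"
    unfolding t(3) by (rule cr_comb)
  then show ?thesis using supp_gen(1)[of k j] supp_gen(1)[of k "j+1"] t by simp
qed

lemma cr_on_edge: "x \<in> E k \<Longrightarrow> cr (d k) (x - W k) = 0"
proof -
  assume "x \<in> E k"
  then obtain t where t: "x = W k + complex_of_real t * d k" by (auto simp: edge_param)
  show ?thesis unfolding t by (simp add: cr_self)
qed

lemma line_cases:
  assumes x: "x \<in> E j" and z: "cr (d k) (x - W k) = 0"
  shows "(j - k) mod int n = 0 \<or> ((j - k) mod int n = 1 \<and> x = W j) \<or> ((k - j) mod int n = 1 \<and> x = W k)"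
proof -
  obtain t where t: "0 \<le> t" "t \<le> 1" "x = W j + complex_of_real t * d j" using x by (auto simp: edge_param)
  have e: "(1 - t) * cr (d k) (W j - W k) + t * cr (d k) (W (j+1) - W k) = 0"
    using z unfolding t(3) cr_comb .
  have A: "cr (d k) (W j - W k) \<ge> 0" "cr (d k) (W (j+1) - W k) \<ge> 0" by (rule supp_gen(1))+
  have m1: "(j + 1 - k) mod int n = (if (j-k) mod int n + 1 = int n then 0 else (j-k) mod int n + 1)"
    using mod_cases_int[of "int n" "j - k"] npos by (simp add: algebra_simps)
  have kj: "(k - j) mod int n = 1" if "(j + 1 - k) mod int n = 0"
  proof -
    have "(k - j) mod int n = (1 - (j + 1 - k)) mod int n" by simp
    also have "\<dots> = (1 mod int n - (j + 1 - k) mod int n) mod int n" by (simp add: mod_diff_eq)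
    also have "\<dots> = 1" using that nint by simp
    finally show ?thesis .
  qed
  show ?thesis
  proof (cases "t = 0")
    case True
    then have "cr (d k) (W j - W k) = 0" using e by simp
    then have "(j - k) mod int n = 0 \<or> (j - k) mod int n = 1" using supp_gen(2)[of j k] by fastforce
    then show ?thesis using True t(3) by auto
  next
    case False
    show ?thesis
    proof (cases "t = 1")
      case True
      then have "cr (d k) (W (j+1) - W k) = 0" using e by simp
      then have "(j + 1 - k) mod int n = 0 \<or> (j + 1 - k) mod int n = 1" using supp_gen(2)[of "j+1" k] by fastforce
      moreover have "x = W (j+1)" using True t(3) by simp
      moreover have "W (j+1) = W k" if "(j + 1 - k) mod int n = 0"
        by (rule W_modeq) (use that in \<open>simp add: mod_eq_dvd_iff dvd_eq_mod_eq_0\<close>)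
      ultimately show ?thesis using m1 kj by (auto split: if_splits)
    next
      case False
      with \<open>t \<noteq> 0\<close> t have tt: "0 < t" "t < 1" by auto
      have "cr (d k) (W j - W k) = 0" "cr (d k) (W (j+1) - W k) = 0"
        using e A tt by (smt (verit, best) mult_nonneg_nonneg mult_pos_pos)+
      then have "(j - k) mod int n \<in> {0,1}" "(j + 1 - k) mod int n \<in> {0,1}"
        using supp_gen(2)[of j k] supp_gen(2)[of "j+1" k] by fastforce+
      then show ?thesis using m1 nint by (auto split: if_splits)
    qed
  qed
qed

end


lemma modeq_of_diff1: "(x - y) mod (m::int) = 1 mod m \<Longrightarrow> x mod m = (y + 1) mod m"
  by (simp add: mod_eq_dvd_iff algebra_simps)

context prp begin

lemma d_nz: "d k \<noteq> 0"
proof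
  assume "d k = 0"
  then have "cr (d k) (W (k+2) - W k) = 0" by (simp add: cr_def)
  moreover have "cr (d k) (W (k+2) - W k) > 0" by (rule supp_gen(2)) (use nint in auto)
  ultimately show False by simp
qed

lemma on_line: "x \<in> E j \<Longrightarrow> cr (d k) (x - W k) = 0 \<Longrightarrow> x \<in> E k"
proof -
  assume x: "x \<in> E j" and z: "cr (d k) (x - W k) = 0"
  from line_cases[OF x z] show ?thesis
  proof (elim disjE conjE)
    assume "(j - k) mod int n = 0"
    then have "W j = W k" "W (j+1) = W (k+1)"
      by (auto intro!: W_modeq simp: mod_eq_dvd_iff dvd_eq_mod_eq_0)
    then show ?thesis using x by simp
  next
    assume "(j - k) mod int n = 1" "x = W j"
    then have "W j = W (k+1)" using nint by (intro W_modeq modeq_of_diff1) simp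
    then show ?thesis using \<open>x = W j\<close> by simp
  next
    assume "x = W k" then show ?thesis by simp
  qed
qed

lemma inter_edges:
  assumes "x \<in> E j" "x \<in> E k" "(j - k) mod int n \<noteq> 0"
  shows "((j - k) mod int n = 1 \<and> x = W j) \<or> ((k - j) mod int n = 1 \<and> x = W k)"
  using line_cases[OF assms(1) cr_on_edge[OF assms(2)]] assms(3) by auto

lemma range_eq: "0 \<le> a \<Longrightarrow> a < int n \<Longrightarrow> 0 \<le> b \<Longrightarrow> b < int n \<Longrightarrow> a mod int n = b mod int n \<Longrightarrow> a = b"
  by simp

lemma range_neq: "0 \<le> a \<Longrightarrow> a < int n \<Longrightarrow> 0 \<le> b \<Longrightarrow> b < int n \<Longrightarrow> a \<noteq> b \<Longrightarrow> (a - b) mod int n \<noteq> 0"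
proof
  assume h: "0 \<le> a" "a < int n" "0 \<le> b" "b < int n" "a \<noteq> b" "(a - b) mod int n = 0"
  then have "a mod int n = b mod int n" by (metis mod_eq_dvd_iff dvd_eq_mod_eq_0)
  moreover have "a mod int n = a" "b mod int n = b" using h by simp_all
  ultimately show False using h by simp
qed

lemma choose_ab:
  assumes "card (S \<inter> E k) = 2"
  shows "\<exists>a b. a \<in> S \<inter> E k \<and> b \<in> S \<inter> E k \<and> a \<noteq> b \<and> a \<noteq> W (k+1) \<and> b \<noteq> W k"
proof -
  obtain x y where xy: "x \<noteq> y" "S \<inter> E k = {x, y}" using assms by (auto simp: card_2_iff)
  have ne: "W k \<noteq> W (k+1)" using d_nz[of k] by auto
  show ?thesis
  proof (cases "x = W (k+1)")
    case True then show ?thesis using xy ne by (intro exI[of _ y] exI[of _ x]) auto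
  next
    case False
    show ?thesis
    proof (cases "y = W k")
      case True then show ?thesis using xy ne False by (intro exI[of _ y] exI[of _ x]) auto
    next
      case F2: False
      show ?thesis using xy False F2 by (intro exI[of _ x] exI[of _ y]) auto
    qed
  qed
qed

lemma pair_cases: "card (S \<inter> E k) = 2 \<or> card (S \<inter> E (k+1)) = 2"
  using pair[of k] by auto

lemma S_on_edges: "s \<in> S \<Longrightarrow> \<exists>k. s \<in> E k"
proof -
  assume sS: "s \<in> S"
  have "\<forall>k. \<exists>ab. card (S \<inter> E k) = 2 \<longrightarrow> (fst ab \<in> S \<inter> E k \<and> snd ab \<in> S \<inter> E k \<and> fst ab \<noteq> snd ab \<and> fst ab \<noteq> W (k+1) \<and> snd ab \<noteq> W k)"
    using choose_ab by fastforce
  then obtain AB where AB: "\<And>k. card (S \<inter> E k) = 2 \<Longrightarrow> (fst (AB k) \<in> S \<inter> E k \<and> snd (AB k) \<in> S \<inter> E k \<and> fst (AB k) \<noteq> snd (AB k) \<and> fst (AB k) \<noteq> W (k+1) \<and> snd (AB k) \<noteq> W k)"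
    by metis
  define A where "A k = fst (AB k)" for k
  define B where "B k = snd (AB k)" for k
  define F where "F = {k. card (S \<inter> E k) = 2}"
  define g where "g j = (if j \<in> F then A j else B ((j - 1) mod int n))" for j
  have AF: "A k \<in> S" "A k \<in> E k" "A k \<noteq> B k" "A k \<noteq> W (k+1)" "B k \<in> S" "B k \<in> E k" "B k \<noteq> W k" if "k \<in> F" for k
    using AB[of k] that unfolding F_def A_def B_def by auto
  have Wm: "W ((j - 1) mod int n) = W (j - 1)" "W ((j - 1) mod int n + 1) = W j" for j
    by (rule W_modeq; simp add: mod_simps)+
  have Em: "E ((j - 1) mod int n) = closed_segment (W (j - 1)) (W j)" for j using Wm by simp
  have notF: "(j - 1) mod int n \<in> F" if "j \<notin> F" for j
    using pair_cases[of "j-1"] that unfolding F_def mem_Collect_eq Wm by simp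
  have gS: "g j \<in> S" for j using AF notF unfolding g_def by auto
  have ge: "g j \<in> E j \<or> g j \<in> closed_segment (W (j - 1)) (W j)" for j using AF notF unfolding g_def by (metis Em)
  have inj: "inj_on g {0..<int n}"
  proof (rule inj_onI, rule ccontr)
    fix j1 j2 assume j: "j1 \<in> {0..<int n}" "j2 \<in> {0..<int n}" "g j1 = g j2" "j1 \<noteq> j2"
    have nz: "(j1 - j2) mod int n \<noteq> 0" "(j2 - j1) mod int n \<noteq> 0"
      using j range_neq[of j1 j2] range_neq[of j2 j1] by auto
    define k1 where "k1 = (j1 - 1) mod int n"
    define k2 where "k2 = (j2 - 1) mod int n"
    have k12: "0 \<le> k1" "k1 < int n" "0 \<le> k2" "k2 < int n" using npos by (simp_all add: k1_def k2_def)
    have Wk: "W (k1 + 1) = W j1" "W (k2+1) = W j2" using Wm unfolding k1_def k2_def by auto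
    have kj: "(k1 + 1) mod int n = j1" "(k2 + 1) mod int n = j2" using j(1,2)
      by (auto simp: k1_def k2_def mod_simps)
    show False
    proof (cases "j1 \<in> F"; cases "j2 \<in> F")
      assume F1: "j1 \<in> F" and F2: "j2 \<in> F"
      then have "A j1 = A j2" using j unfolding g_def by simp
      then have x: "A j1 \<in> E j1" "A j1 \<in> E j2" using AF F1 F2 by metis+
      from inter_edges[OF x nz(1)] show False
      proof
        assume "(j1 - j2) mod int n = 1 \<and> A j1 = W j1"
        then have "W j1 = W (j2 + 1)" using nint by (intro W_modeq modeq_of_diff1) simp_all
        then show False using AF(4)[OF F2] \<open>A j1 = A j2\<close> \<open>(j1 - j2) mod int n = 1 \<and> A j1 = W j1\<close> by simp
      next
        assume "(j2 - j1) mod int n = 1 \<and> A j1 = W j2"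
        then have "W j2 = W (j1 + 1)" using nint by (intro W_modeq modeq_of_diff1) simp_all
        then show False using AF(4)[OF F1] \<open>(j2 - j1) mod int n = 1 \<and> A j1 = W j2\<close> by simp
      qed
    next
      assume F1: "j1 \<in> F" and F2: "j2 \<notin> F"
      have kF: "k2 \<in> F" using notF[OF F2] k2_def by simp
      have eq: "A j1 = B k2" using j F1 F2 unfolding g_def k2_def by simp
      show False
      proof (cases "k2 = j1")
        case True then show False using eq AF(3)[OF F1] by simp
      next
        case False
        then have nz2: "(j1 - k2) mod int n \<noteq> 0" using j(1) k12 range_neq[of j1 k2] by auto
        have x: "A j1 \<in> E j1" "A j1 \<in> E k2" using AF F1 kF eq by metis+
        from inter_edges[OF x nz2] show False
        proof
          assume h: "(j1 - k2) mod int n = 1 \<and> A j1 = W j1"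
          then have "j1 mod int n = (k2 + 1) mod int n" using nint by (intro modeq_of_diff1) simp
          then have "j1 = j2" using kj j(1) by simp
          then show False using j by simp
        next
          assume h: "(k2 - j1) mod int n = 1 \<and> A j1 = W k2"
          then have "W k2 = W (j1 + 1)" using nint by (intro W_modeq modeq_of_diff1) simp_all
          then show False using AF(4)[OF F1] h by simp
        qed
      qed
    next
      assume F1: "j1 \<notin> F" and F2: "j2 \<in> F"
      have kF: "k1 \<in> F" using notF[OF F1] k1_def by simp
      have eq: "A j2 = B k1" using j F1 F2 unfolding g_def k1_def by simp
      show False
      proof (cases "k1 = j2")
        case True then show False using eq AF(3)[OF F2] by simp
      next
        case False
        then have nz2: "(j2 - k1) mod int n \<noteq> 0" using j(2) k12 range_neq[of j2 k1] by auto
        have x: "A j2 \<in> E j2" "A j2 \<in> E k1" using AF F2 kF eq by metis+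
        from inter_edges[OF x nz2] show False
        proof
          assume h: "(j2 - k1) mod int n = 1 \<and> A j2 = W j2"
          then have "j2 mod int n = (k1 + 1) mod int n" using nint by (intro modeq_of_diff1) simp
          then have "j1 = j2" using kj j(2) by simp
          then show False using j by simp
        next
          assume h: "(k1 - j2) mod int n = 1 \<and> A j2 = W k1"
          then have "W k1 = W (j2 + 1)" using nint by (intro W_modeq modeq_of_diff1) simp_all
          then show False using AF(4)[OF F2] h by simp
        qed
      qed
    next
      assume F1: "j1 \<notin> F" and F2: "j2 \<notin> F"
      have kF: "k1 \<in> F" "k2 \<in> F" using notF[OF F1] notF[OF F2] k1_def k2_def by simp_all
      have eq: "B k1 = B k2" using j F1 F2 unfolding g_def k1_def k2_def by simp
      have "k1 \<noteq> k2" using kj j by auto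
      then have nz2: "(k1 - k2) mod int n \<noteq> 0" using k12 range_neq[of k1 k2] by auto
      have x: "B k1 \<in> E k1" "B k1 \<in> E k2" using AF kF eq by metis+
      from inter_edges[OF x nz2] show False
        using AF(7)[OF kF(1)] AF(7)[OF kF(2)] eq by auto
    qed
  qed
  have sub: "g ` {0..<int n} \<subseteq> S" using gS by auto
  have "card (g ` {0..<int n}) = n" using card_image[OF inj] by simp
  then have "g ` {0..<int n} = S" using card_subset_eq[OF finS sub] cardS by simp
  then obtain j where "s = g j" using sS by auto
  then show ?thesis using ge[of j] by (metis diff_add_cancel)
qed

end


lemma rot_contra:
  assumes th: "0 < \<theta>" "\<theta> < pi" and v: "Re v > 0" "Im v \<ge> 0"
    and w: "Re (cis \<theta> * v) > 0" "Im (cis \<theta> * v) \<le> 0"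
  shows False
proof -
  have s: "sin \<theta> > 0" using th by (rule sin_gt_zero)
  have re: "Re (cis \<theta> * v) = cos \<theta> * Re v - sin \<theta> * Im v" and im: "Im (cis \<theta> * v) = sin \<theta> * Re v + cos \<theta> * Im v"
    by simp_all
  have "sin \<theta> * Re v > 0" using s v by simp
  then have "cos \<theta> * Im v < 0" using w(2) im by linarith
  then have c: "cos \<theta> < 0" using v(2) by (auto simp: mult_less_0_iff)
  have "cos \<theta> * Re v < 0" using c v(1) by (simp add: mult_neg_pos)
  moreover have "sin \<theta> * Im v \<ge> 0" using s v by simp
  ultimately show False using w(1) re by linarith
qed

lemma thales1:
  assumes "cmod (-(1/2) + complex_of_real \<tau> * v) \<le> 1/2" "\<tau> > 0" "v \<noteq> 0"
  shows "Re v > 0"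
proof -
  have "(cmod (-(1/2) + complex_of_real \<tau> * v))^2 \<le> (1/2)^2"
    using assms(1) by (intro power_mono) simp_all
  moreover have "(cmod (-(1/2) + complex_of_real \<tau> * v))^2 = (-(1/2) + \<tau> * Re v)^2 + (\<tau> * Im v)^2"
    by (simp only: cmod_power2) simp
  ultimately have "(-(1/2) + \<tau> * Re v)^2 + (\<tau> * Im v)^2 \<le> 1/4" by (simp add: power2_eq_square)
  then have "\<tau> * (\<tau> * ((Re v)^2 + (Im v)^2)) \<le> \<tau> * Re v" by (simp add: power2_eq_square algebra_simps)
  moreover have "(Re v)^2 + (Im v)^2 > 0" using assms(3) by (simp add: complex_eq_iff sum_power2_gt_zero_iff)
  ultimately have "\<tau> * Re v > 0" using assms(2) by (smt (verit) mult_pos_pos)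
  then show ?thesis using assms(2) by (simp add: zero_less_mult_iff)
qed

lemma thales2:
  assumes "cmod (1/2 - complex_of_real \<tau> * v) \<le> 1/2" "\<tau> > 0" "v \<noteq> 0"
  shows "Re v > 0"
proof -
  have "cmod (-(1/2) + complex_of_real \<tau> * v) = cmod (1/2 - complex_of_real \<tau> * v)"
    by (metis minus_diff_eq norm_minus_cancel uminus_add_conv_diff)
  then show ?thesis using thales1 assms by metis
qed



locale core_ctx = prp +
  assumes pS: "-(1/2) \<in> S" and qS: "1/2 \<in> S"
    and ball: "\<And>s. s \<in> S \<Longrightarrow> cmod s \<le> 1/2" and low: "\<And>s. s \<in> S \<Longrightarrow> Im s \<le> 0"
begin

lemma card2_ne: "card (S \<inter> E k) = 2 \<Longrightarrow> \<exists>s. s \<in> S \<and> s \<in> E k"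
proof -
  assume "card (S \<inter> E k) = 2"
  then have "S \<inter> E k \<noteq> {}" by (metis card.empty zero_neq_numeral)
  then show ?thesis by blast
qed

lemma card2_other: "card (S \<inter> E k) = 2 \<Longrightarrow> \<exists>s. s \<in> S \<and> s \<in> E k \<and> s \<noteq> y"
proof -
  assume "card (S \<inter> E k) = 2"
  then obtain x z where xz: "x \<noteq> z" "S \<inter> E k = {x, z}" by (auto simp: card_2_iff)
  then have "x \<in> S \<inter> E k" "z \<in> S \<inter> E k" by auto
  then show ?thesis using xz(1) by (cases "x = y") blast+
qed

lemma all_on_line:
  assumes "\<And>s. s \<in> S \<Longrightarrow> cr (d i) (s - W i) = 0" shows False
proof -
  have pos: "cr (d i) (W (i + j) - W i) > 0" if "2 \<le> j" "j \<le> 4" for j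
  proof (rule supp_gen(2))
    have "(i + j - i) mod int n = j" using that nint by simp
    then show "(i + j - i) mod int n \<noteq> 0" "(i + j - i) mod int n \<noteq> 1" using that by simp_all
  qed
  obtain a where a: "a = i + 2 \<or> a = i + 3" "card (S \<inter> E a) = 2"
  proof -
    have "i + 2 + 1 = i + 3" by simp
    then show ?thesis using pair_cases[of "i+2"] that by metis
  qed
  then obtain s where s: "s \<in> S" "s \<in> E a" using card2_ne by blast
  then obtain t where t: "0 \<le> t" "t \<le> 1" "s = W a + complex_of_real t * d a" by (auto simp: edge_param)
  have "cr (d i) (s - W i) = (1 - t) * cr (d i) (W a - W i) + t * cr (d i) (W (a+1) - W i)"
    unfolding t(3) by (rule cr_comb)
  moreover have "cr (d i) (W a - W i) > 0" "cr (d i) (W (a+1) - W i) > 0"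
    using a(1) pos[of 2] pos[of 3] pos[of 4] by (auto simp: add.assoc)
  ultimately have "cr (d i) (s - W i) > 0" using t
    by (smt (verit, best) mult_nonneg_nonneg mult_pos_pos)
  then show False using assms[OF s(1)] by simp
qed

end

context core_ctx begin

lemma orient1: "y \<in> E k \<Longrightarrow> y = -(1/2) \<Longrightarrow> Im (d k) \<le> 0"
proof -
  assume y: "y \<in> E k" "y = -(1/2)"
  obtain j where "1/2 \<in> E j" using S_on_edges qS by blast
  then have "cr (d k) (1/2 - W k) \<ge> 0" by (rule supp_edge)
  moreover have "cr (d k) (y - W k) = 0" using y by (intro cr_on_edge)
  ultimately have "cr (d k) (1/2 - W k) - cr (d k) (y - W k) \<ge> 0" by simp
  then show ?thesis using y(2) by (simp add: cr_expand algebra_simps)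
qed

lemma orient2: "y \<in> E k \<Longrightarrow> y = 1/2 \<Longrightarrow> Im (d k) \<ge> 0"
proof -
  assume y: "y \<in> E k" "y = 1/2"
  obtain j where "-(1/2) \<in> E j" using S_on_edges pS by blast
  then have "cr (d k) (-(1/2) - W k) \<ge> 0" by (rule supp_edge)
  moreover have "cr (d k) (y - W k) = 0" using y by (intro cr_on_edge)
  ultimately have "cr (d k) (-(1/2) - W k) - cr (d k) (y - W k) \<ge> 0" by simp
  then show ?thesis using y(2) by (simp add: cr_expand algebra_simps)
qed

lemma horiz:
  assumes z: "z \<in> E i" "Im z = 0" and hd: "Im (d i) = 0" and m: "Im (W m) > 0"
  shows False
proof -
  obtain t where t: "z = W i + complex_of_real t * d i" using z by (auto simp: edge_param)
  have Wi: "Im (W i) = 0" using z(2) hd unfolding t by simp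
  have crf: "cr (d i) (w - W i) = Re (d i) * Im w" for w using hd Wi by (simp add: cr_expand)
  have "cr (d i) (W m - W i) \<ge> 0" by (rule supp_gen(1))
  then have "Re (d i) \<ge> 0" using m crf[of "W m"] by (simp add: zero_le_mult_iff)
  moreover have "Re (d i) \<noteq> 0" using d_nz[of i] hd by (simp add: complex_eq_iff)
  ultimately have rp: "Re (d i) > 0" by simp
  have "cr (d i) (s - W i) = 0" if sS: "s \<in> S" for s
  proof -
    obtain j where "s \<in> E j" using S_on_edges sS by blast
    then have "cr (d i) (s - W i) \<ge> 0" by (rule supp_edge)
    then have "Im s \<ge> 0" using crf[of s] rp by (simp add: zero_le_mult_iff)
    then have "Im s = 0" using low[OF sS] by simp
    then show ?thesis using crf[of s] by simp
  qed
  then show False by (rule all_on_line)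
qed

lemma chord:
  assumes y: "y \<in> E k" "Im y = 0" and hd: "Im (d k) \<noteq> 0" and m: "Im (W m) > 0"
  shows "y = -(1/2) \<or> y = 1/2"
proof -
  define x where "x = Re y"
  have yx: "y = complex_of_real x" using y(2) by (simp add: x_def complex_eq_iff)
  have crd: "cr v (a - w) - cr v (b - w) = Re v * (Im a - Im b) - Im v * (Re a - Re b)" for v a b w
    by (simp add: cr_expand algebra_simps)
  show ?thesis
  proof (cases "x < -(1/2)")
    case True
    obtain i where i: "-(1/2) \<in> E i" using S_on_edges pS by blast
    obtain j where "1/2 \<in> E j" using S_on_edges qS by blast
    have g0: "cr (d i) (-(1/2) - W i) = 0" using i by (rule cr_on_edge)
    have g1: "cr (d i) (1/2 - W i) \<ge> 0" using \<open>1/2 \<in> E j\<close> by (rule supp_edge)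
    have g2: "cr (d i) (y - W i) \<ge> 0" using y(1) by (rule supp_edge)
    have "Im (d i) \<le> 0" using g0 g1 crd[of "d i" "1/2" "W i" "-(1/2)"] by simp
    moreover have "Im (d i) * (x + 1/2) \<le> 0" using g0 g2 crd[of "d i" y "W i" "-(1/2)"] yx by (simp add: algebra_simps)
    then have "Im (d i) \<ge> 0" using True by (simp add: mult_le_0_iff)
    ultimately have "Im (d i) = 0" by simp
    then show ?thesis using horiz[OF i _ _ m] by simp
  next
    case F1: False
    show ?thesis
    proof (cases "x > 1/2")
      case True
      obtain i where i: "1/2 \<in> E i" using S_on_edges qS by blast
      obtain j where "-(1/2) \<in> E j" using S_on_edges pS by blast
      have g0: "cr (d i) (1/2 - W i) = 0" using i by (rule cr_on_edge)
      have g1: "cr (d i) (-(1/2) - W i) \<ge> 0" using \<open>-(1/2) \<in> E j\<close> by (rule supp_edge)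
      have g2: "cr (d i) (y - W i) \<ge> 0" using y(1) by (rule supp_edge)
      have "Im (d i) \<ge> 0" using g0 g1 crd[of "d i" "-(1/2)" "W i" "1/2"] by simp
      moreover have "Im (d i) * (x - 1/2) \<le> 0" using g0 g2 crd[of "d i" y "W i" "1/2"] yx by (simp add: algebra_simps)
      then have "Im (d i) \<le> 0" using True by (simp add: mult_le_0_iff)
      ultimately have "Im (d i) = 0" by simp
      then show ?thesis using horiz[OF i _ _ m] by simp
    next
      case F2: False
      show ?thesis
      proof (rule ccontr)
        assume "\<not> (y = -(1/2) \<or> y = 1/2)"
        then have "x \<noteq> -(1/2)" "x \<noteq> 1/2" using yx by (auto simp: complex_eq_iff)
        then have xr: "-(1/2) < x" "x < 1/2" using F1 F2 by auto
        obtain j1 where "-(1/2) \<in> E j1" using S_on_edges pS by blast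
        obtain j2 where "1/2 \<in> E j2" using S_on_edges qS by blast
        have g0: "cr (d k) (y - W k) = 0" using y(1) by (rule cr_on_edge)
        have g1: "cr (d k) (-(1/2) - W k) \<ge> 0" using \<open>-(1/2) \<in> E j1\<close> by (rule supp_edge)
        have g2: "cr (d k) (1/2 - W k) \<ge> 0" using \<open>1/2 \<in> E j2\<close> by (rule supp_edge)
        have "Im (d k) * (x + 1/2) \<ge> 0" using g0 g1 crd[of "d k" "-(1/2)" "W k" y] yx by (simp add: algebra_simps)
        then have "Im (d k) \<ge> 0" using xr by (simp add: zero_le_mult_iff)
        moreover have "Im (d k) * (1/2 - x) \<le> 0" using g0 g2 crd[of "d k" "1/2" "W k" y] yx by (simp add: algebra_simps)
        then have "Im (d k) \<le> 0" using xr by (simp add: mult_le_0_iff)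
        ultimately show False using hd by simp
      qed
    qed
  qed
qed

end


context core_ctx begin

lemma noS: "Im (W k) > 0 \<Longrightarrow> Im (W (k+1)) > 0 \<Longrightarrow> S \<inter> E k = {}"
proof (rule ccontr)
  assume h: "Im (W k) > 0" "Im (W (k+1)) > 0" "S \<inter> E k \<noteq> {}"
  then obtain s where s: "s \<in> S" "s \<in> E k" by blast
  then obtain t where t: "0 \<le> t" "t \<le> 1" "s = W k + complex_of_real t * d k" by (auto simp: edge_param)
  have "Im s = (1 - t) * Im (W k) + t * Im (W (k+1))" unfolding t(3) by (simp add: algebra_simps)
  moreover have "(1 - t) * Im (W k) + t * Im (W (k+1)) > 0"
  proof (cases "t = 0")
    case True then show ?thesis using h by simp
  next
    case False
    then have "t * Im (W (k+1)) > 0" using t h by simp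
    moreover have "(1 - t) * Im (W k) \<ge> 0" using t h by simp
    ultimately show ?thesis by linarith
  qed
  ultimately show False using low[OF s(1)] by simp
qed

lemma rot_t: "d (j + t) = cis (2*pi*real_of_int t/real n) * d j"
  using d_rot[of n c \<rho> th j t] by (simp add: add.assoc)

lemma ang: "t = 1 \<or> t = 2 \<Longrightarrow> 0 < 2*pi*real_of_int t/real n \<and> 2*pi*real_of_int t/real n < pi"
proof -
  assume t: "t = 1 \<or> t = 2"
  have n: "real n \<ge> 5" using n5 by simp
  have "2*pi*real_of_int t < pi * real n" using t n pi_gt_zero by auto
  then show ?thesis using t n pi_gt_zero by (auto simp: field_simps)
qed

lemma qside:
  assumes t: "t = 1 \<or> t = 2" and j0: "Im (W j) \<le> 0" and j1: "Im (W (j+1)) > 0"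
    and j2: "t = 2 \<Longrightarrow> Im (W (j+2)) > 0" and dm: "Re (d (j+t)) > 0" "Im (d (j+t)) < 0"
  shows False
proof -
  have dj: "Im (d j) > 0" using j0 j1 by simp
  define \<tau> where "\<tau> = - Im (W j) / Im (d j)"
  have \<tau>0: "\<tau> \<ge> 0" using j0 dj by (simp add: \<tau>_def divide_nonpos_pos)
  have \<tau>1: "\<tau> < 1"
  proof -
    have "- Im (W j) < Im (d j)" using j1 by simp
    then show ?thesis unfolding \<tau>_def using dj by (metis divide_less_eq_1_pos)
  qed
  have \<tau>e: "\<tau> * Im (d j) = - Im (W j)" using dj by (simp add: \<tau>_def)
  define y where "y = W j + complex_of_real \<tau> * d j"
  have yE: "y \<in> E j" unfolding y_def edge_param using \<tau>0 \<tau>1 by auto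
  have yIm: "Im y = 0" unfolding y_def using \<tau>e by simp
  have "y = -(1/2) \<or> y = 1/2" using chord[OF yE yIm _ j1] dj by simp
  moreover have "y \<noteq> -(1/2)" using orient1[OF yE] dj by force
  ultimately have y: "y = 1/2" by simp
  have rot: "d (j+t) = cis (2*pi*real_of_int t/real n) * d j" by (rule rot_t)
  show False
  proof (cases "\<tau> > 0")
    case True
    have ne: "W j \<noteq> W (j+1)" using d_nz[of j] by auto
    have "y \<in> I j" unfolding y_def oseg_param using ne True \<tau>1 by auto
    then have "S \<inter> I j \<noteq> {}" using y qS by auto
    then have "card (S \<inter> E j) = 2" using pair[of "j-1"] by simp
    then obtain b where b: "b \<in> S" "b \<in> E j" "b \<noteq> y" using card2_other by blast
    then obtain \<sigma> where \<sigma>: "0 \<le> \<sigma>" "\<sigma> \<le> 1" "b = W j + complex_of_real \<sigma> * d j" by (auto simp: edge_param)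
    have "Im (W j) + \<sigma> * Im (d j) \<le> 0" using low[OF b(1)] \<sigma>(3) by simp
    then have "\<sigma> * Im (d j) \<le> \<tau> * Im (d j)" using \<tau>e by simp
    then have "\<sigma> \<le> \<tau>" using dj by simp
    moreover have "\<sigma> \<noteq> \<tau>" using b(3) \<sigma>(3) y_def by auto
    ultimately have st: "\<tau> - \<sigma> > 0" by simp
    have "b = y - complex_of_real (\<tau> - \<sigma>) * d j" unfolding \<sigma>(3) y_def of_real_diff by algebra
    then have "b = 1/2 - complex_of_real (\<tau> - \<sigma>) * d j" using y by simp
    then have "Re (d j) > 0" using thales2[OF _ st d_nz[of j]] ball[OF b(1)] by simp
    moreover have "Re (cis (2*pi*real_of_int t/real n) * d j) > 0" using dm(1) unfolding rot .
    moreover have "Im (cis (2*pi*real_of_int t/real n) * d j) \<le> 0" using dm(2) unfolding rot by simp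
    ultimately show False using rot_contra[of "2*pi*real_of_int t/real n" "d j"] ang[OF t] dj by auto
  next
    case False
    then have "\<tau> = 0" using \<tau>0 by simp
    then have yW: "y = W j" "Im (W j) = 0" using y_def \<tau>e by auto
    have sub: "S \<inter> E j \<subseteq> {W j}"
    proof
      fix s assume s: "s \<in> S \<inter> E j"
      then obtain \<sigma> where \<sigma>: "0 \<le> \<sigma>" "\<sigma> \<le> 1" "s = W j + complex_of_real \<sigma> * d j" by (auto simp: edge_param)
      have "\<sigma> * Im (d j) \<le> 0" using low[of s] s \<sigma>(3) yW by simp
      then have "\<sigma> = 0" using \<sigma>(1) dj by (simp add: mult_le_0_iff)
      then show "s \<in> {W j}" using \<sigma>(3) by simp
    qed
    have c1: "card (S \<inter> E j) \<noteq> 2"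
    proof
      assume "card (S \<inter> E j) = 2"
      moreover have "card (S \<inter> E j) \<le> 1" using card_mono[OF _ sub] by simp
      ultimately show False by simp
    qed
    have "card (S \<inter> E (j+1)) = 2" using pair[of j] c1 by auto
    then obtain s where "s \<in> S" "s \<in> E (j+1)" using card2_ne by blast
    then have t1: "t = 1"
    proof -
      assume "s \<in> S" "s \<in> E (j+1)"
      show "t = 1"
      proof (rule ccontr)
        assume "t \<noteq> 1"
        then have "t = 2" using t by simp
        then have "S \<inter> E (j+1) = {}" using noS[of "j+1"] j1 j2 by (simp add: add.assoc)
        then show False using \<open>s \<in> S\<close> \<open>s \<in> E (j+1)\<close> by blast
      qed
    qed
    have "card (S \<inter> closed_segment (W (j-1)) (W j)) = 2" using pair[of "j-1"] c1 by auto
    then have "card (S \<inter> E (j-1)) = 2" by simp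
    then obtain b where b: "b \<in> S" "b \<in> E (j-1)" "b \<noteq> W j" using card2_other by blast
    then obtain \<sigma> where \<sigma>: "0 \<le> \<sigma>" "\<sigma> \<le> 1" "b = W (j-1) + complex_of_real \<sigma> * d (j-1)"
      by (auto simp: seg_param)
    have "\<sigma> \<noteq> 1" using b(3) \<sigma>(3) by auto
    then have s1: "1 - \<sigma> > 0" using \<sigma>(2) by simp
    have bb: "b = W j - complex_of_real (1 - \<sigma>) * d (j-1)" unfolding \<sigma>(3) of_real_diff by simp algebra
    then have "b = 1/2 - complex_of_real (1 - \<sigma>) * d (j-1)" using yW y by simp
    then have re: "Re (d (j-1)) > 0" using thales2[OF _ s1 d_nz[of "j-1"]] ball[OF b(1)] by simp
    have "Im (W j) - (1 - \<sigma>) * Im (d (j-1)) \<le> 0" using low[OF b(1)] bb by simp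
    then have "(1 - \<sigma>) * Im (d (j-1)) \<ge> 0" using yW by simp
    then have im: "Im (d (j-1)) \<ge> 0" using s1 by (simp add: zero_le_mult_iff)
    have rot2: "d (j+1) = cis (2*pi*real_of_int 2/real n) * d (j-1)"
      using rot_t[of "j-1" 2] by (simp add: ac_simps)
    have dm1: "Re (d (j+1)) > 0" "Im (d (j+1)) < 0" using dm t1 by simp_all
    have "Re (cis (2*pi*real_of_int 2/real n) * d (j-1)) > 0" using dm1(1) unfolding rot2 .
    moreover have "Im (cis (2*pi*real_of_int 2/real n) * d (j-1)) \<le> 0" using dm1(2) unfolding rot2 by simp
    moreover have "0 < 2*pi*real_of_int 2/real n" "2*pi*real_of_int 2/real n < pi" using ang[of 2] by simp_all
    ultimately show False using rot_contra[of "2*pi*real_of_int 2/real n" "d (j-1)"] re im by blast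
  qed
qed

end


lemma div_neg_mul: "x \<noteq> 0 \<Longrightarrow> a / (- x) * x = - (a::real)" by (simp add: field_simps)

context core_ctx begin

lemma pside:
  assumes t: "t = 1 \<or> t = 2" and j0: "Im (W (k0+t)) > 0" and j1: "Im (W (k0+t+1)) \<le> 0"
    and j2: "t = 2 \<Longrightarrow> Im (W (k0+1)) > 0" and dk: "Re (d k0) > 0" "Im (d k0) > 0"
  shows False
proof -
  define j where "j = k0 + t"
  have J0: "Im (W j) > 0" and J1: "Im (W (j+1)) \<le> 0" using j0 j1 by (simp_all add: j_def)
  have dj: "Im (d j) < 0" using J0 J1 by simp
  define \<tau> where "\<tau> = Im (W j) / (- Im (d j))"
  have \<tau>0: "\<tau> > 0" using J0 dj by (simp add: \<tau>_def)
  have \<tau>1: "\<tau> \<le> 1"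
  proof -
    have "Im (W j) \<le> - Im (d j)" using J1 by simp
    then show ?thesis unfolding \<tau>_def using dj by (simp add: divide_le_eq_1)
  qed
  have \<tau>e: "\<tau> * Im (d j) = - Im (W j)" unfolding \<tau>_def by (rule div_neg_mul) (use dj in simp)
  define y where "y = W j + complex_of_real \<tau> * d j"
  have yE: "y \<in> E j" unfolding y_def edge_param using \<tau>0 \<tau>1 by (intro exI[of _ \<tau>]) auto
  have yIm: "Im y = 0" unfolding y_def using \<tau>e by simp
  have "y = -(1/2) \<or> y = 1/2" using chord[OF yE yIm _ J0] dj by simp
  moreover have "y \<noteq> 1/2" using orient2[OF yE] dj by force
  ultimately have y: "y = -(1/2)" by simp
  have rot: "d j = cis (2*pi*real_of_int t/real n) * d k0" unfolding j_def by (rule rot_t)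
  show False
  proof (cases "\<tau> < 1")
    case True
    have ne: "W j \<noteq> W (j+1)" using d_nz[of j] by auto
    have "y \<in> I j" unfolding y_def oseg_param using ne True \<tau>0 by auto
    then have "S \<inter> I j \<noteq> {}" using y pS by auto
    then have "card (S \<inter> E j) = 2" using pair[of j] by auto
    then obtain b where b: "b \<in> S" "b \<in> E j" "b \<noteq> y" using card2_other by blast
    then obtain \<sigma> where \<sigma>: "0 \<le> \<sigma>" "\<sigma> \<le> 1" "b = W j + complex_of_real \<sigma> * d j" by (auto simp: seg_param)
    have "Im (W j) + \<sigma> * Im (d j) \<le> 0" using low[OF b(1)] \<sigma>(3) by simp
    then have "\<sigma> * Im (d j) \<le> \<tau> * Im (d j)" using \<tau>e by simp
    then have "\<tau> \<le> \<sigma>" using dj by (simp add: mult_le_cancel_right)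
    moreover have "\<sigma> \<noteq> \<tau>" using b(3) \<sigma>(3) y_def by auto
    ultimately have st: "\<sigma> - \<tau> > 0" by simp
    have "b = y + complex_of_real (\<sigma> - \<tau>) * d j" unfolding \<sigma>(3) y_def of_real_diff by algebra
    then have "b = -(1/2) + complex_of_real (\<sigma> - \<tau>) * d j" using y by simp
    then have re: "Re (d j) > 0" using thales1[OF _ st d_nz[of j]] ball[OF b(1)] by simp
    have "Re (cis (2*pi*real_of_int t/real n) * d k0) > 0" using re unfolding rot .
    moreover have "Im (cis (2*pi*real_of_int t/real n) * d k0) \<le> 0" using dj unfolding rot by simp
    ultimately show False using rot_contra[of "2*pi*real_of_int t/real n" "d k0"] ang[OF t] dk by auto
  next
    case False
    then have "\<tau> = 1" using \<tau>1 by simp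
    then have yW: "y = W (j+1)" "Im (W j) + Im (d j) = 0" using y_def \<tau>e by auto
    have sub: "S \<inter> E j \<subseteq> {W (j+1)}"
    proof
      fix s assume s: "s \<in> S \<inter> E j"
      then obtain \<sigma> where \<sigma>: "0 \<le> \<sigma>" "\<sigma> \<le> 1" "s = W j + complex_of_real \<sigma> * d j" by (auto simp: seg_param)
      have "Im (W j) + \<sigma> * Im (d j) \<le> 0" using low[of s] s \<sigma>(3) by simp
      then have "(1 - \<sigma>) * Im (W j) \<le> 0" using yW(2) by (simp add: algebra_simps)
      then have "1 - \<sigma> \<le> 0" using J0 by (simp add: mult_le_0_iff)
      then have "\<sigma> = 1" using \<sigma>(2) by simp
      then show "s \<in> {W (j+1)}" using \<sigma>(3) by simp
    qed
    have c1: "card (S \<inter> E j) \<noteq> 2"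
    proof
      assume "card (S \<inter> E j) = 2"
      moreover have "card (S \<inter> E j) \<le> 1" using card_mono[OF _ sub] by simp
      ultimately show False by simp
    qed
    have "card (S \<inter> closed_segment (W (j-1)) (W j)) = 2" using pair[of "j-1"] c1 by auto
    then obtain s where s: "s \<in> S" "s \<in> closed_segment (W (j-1)) (W j)" by (metis card2_ne diff_add_cancel)
    have t1: "t = 1"
    proof (rule ccontr)
      assume "t \<noteq> 1"
      then have t2: "t = 2" using t by simp
      then have "S \<inter> E (k0+1) = {}" using noS[of "k0+1"] j2 j0 by (simp add: add.assoc)
      moreover have "j - 1 = k0 + 1" using t2 j_def by simp
      ultimately show False using s by (auto simp: ac_simps)
    qed
    have "card (S \<inter> E (j+1)) = 2" using pair[of j] c1 by auto
    then obtain b where b: "b \<in> S" "b \<in> E (j+1)" "b \<noteq> W (j+1)" using card2_other by blast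
    then obtain \<sigma> where \<sigma>: "0 \<le> \<sigma>" "\<sigma> \<le> 1" "b = W (j+1) + complex_of_real \<sigma> * d (j+1)"
      by (auto simp: seg_param)
    have s0: "\<sigma> > 0" using b(3) \<sigma>(1,3) by (cases "\<sigma> = 0") auto
    have "b = -(1/2) + complex_of_real \<sigma> * d (j+1)" using \<sigma>(3) yW y by simp
    then have re: "Re (d (j+1)) > 0" using thales1[OF _ s0 d_nz[of "j+1"]] ball[OF b(1)] by simp
    have "Im (W (j+1)) + \<sigma> * Im (d (j+1)) \<le> 0" using low[OF b(1)] \<sigma>(3) by simp
    moreover have "Im (W (j+1)) = 0" using yW y by simp
    ultimately have im: "Im (d (j+1)) \<le> 0" using s0 by (simp add: mult_le_0_iff)
    have rot2: "d (j+1) = cis (2*pi*real_of_int 2/real n) * d k0"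
      using rot_t[of k0 2] t1 j_def by (simp add: ac_simps)
    have "Re (cis (2*pi*real_of_int 2/real n) * d k0) > 0" using re unfolding rot2 .
    moreover have "Im (cis (2*pi*real_of_int 2/real n) * d k0) \<le> 0" using im unfolding rot2 .
    moreover have "0 < 2*pi*real_of_int 2/real n" "2*pi*real_of_int 2/real n < pi" using ang[of 2] by simp_all
    ultimately show False using rot_contra[of "2*pi*real_of_int 2/real n" "d k0"] dk by auto
  qed
qed

end


context core_ctx begin

lemma caseA:
  assumes m: "Im (W m) > 0" and ab: "0 \<le> \<alpha>" "\<alpha> < \<beta>" "\<beta> \<le> 1"
    and aS: "W m + complex_of_real \<alpha> * d m \<in> S" and bS: "W m + complex_of_real \<beta> * d m \<in> S"
  shows False
proof -
  have ia: "Im (W m) + \<alpha> * Im (d m) \<le> 0" using low[OF aS] by simp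
  have ib: "Im (W m) + \<beta> * Im (d m) \<le> 0" using low[OF bS] by simp
  have dm: "Im (d m) < 0"
  proof (rule ccontr)
    assume "\<not> Im (d m) < 0"
    then have "\<alpha> * Im (d m) \<ge> 0" using ab by simp
    then show False using ia m by simp
  qed
  define t0 where "t0 = - Im (W m) / Im (d m)"
  have t0e: "t0 * Im (d m) = - Im (W m)" using dm by (simp add: t0_def)
  have t00: "t0 > 0" using m dm by (simp add: t0_def divide_pos_neg)
  have "\<alpha> * Im (d m) \<le> t0 * Im (d m)" using ia t0e by simp
  then have t0a: "t0 \<le> \<alpha>" using dm by (simp add: mult_le_cancel_right)
  define x0 where "x0 = W m + complex_of_real t0 * d m"
  have xE: "x0 \<in> E m" unfolding x0_def edge_param using t00 t0a ab by (intro exI[of _ t0]) auto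
  have xIm: "Im x0 = 0" unfolding x0_def using t0e by simp
  have "x0 = -(1/2) \<or> x0 = 1/2" using chord[OF xE xIm _ m] dm by simp
  moreover have "x0 \<noteq> 1/2" using orient2[OF xE] dm by force
  ultimately have x0: "x0 = -(1/2)" by simp
  have bt: "\<beta> - t0 > 0" using t0a ab by simp
  have "W m + complex_of_real \<beta> * d m = x0 + complex_of_real (\<beta> - t0) * d m"
    unfolding x0_def of_real_diff by algebra
  then have "cmod (-(1/2) + complex_of_real (\<beta> - t0) * d m) \<le> 1/2" using ball[OF bS] x0 by simp
  then have re: "Re (d m) > 0" using thales1[OF _ bt d_nz[of m]] by simp
  show False
  proof (cases "Im (W (m-1)) \<le> 0")
    case True
    show False using qside[of 1 "m-1"] True m re dm by simp
  next
    case F1: False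
    show False
    proof (cases "Im (W (m-2)) \<le> 0")
      case True
      have e: "m - 2 + 1 = m - 1" "m - 2 + 2 = m" by simp_all
      show False using qside[of 2 "m-2"] True F1 m re dm unfolding e by simp
    next
      case False
      have "S \<inter> E (m-2) = {}" using noS[of "m-2"] False F1 by simp
      moreover have "S \<inter> E (m-1) = {}" using noS[of "m-1"] F1 m by simp
      ultimately show False using pair_cases[of "m-2"] by simp
    qed
  qed
qed

lemma caseB:
  assumes m: "Im (W (k0+1)) > 0" and ab: "0 \<le> \<alpha>" "\<alpha> < \<beta>" "\<beta> \<le> 1"
    and aS: "W k0 + complex_of_real \<alpha> * d k0 \<in> S" and bS: "W k0 + complex_of_real \<beta> * d k0 \<in> S"
  shows False
proof -
  have ia: "Im (W k0) + \<alpha> * Im (d k0) \<le> 0" using low[OF aS] by simp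
  have ib: "Im (W k0) + \<beta> * Im (d k0) \<le> 0" using low[OF bS] by simp
  have m': "Im (W k0) + Im (d k0) > 0" using m by simp
  have dk: "Im (d k0) > 0"
  proof (rule ccontr)
    assume "\<not> Im (d k0) > 0"
    then have "\<beta> * Im (d k0) \<ge> Im (d k0)" using ab
      by (metis mult_right_mono_neg mult_1 not_less)
    then show False using ib m' by simp
  qed
  define t0 where "t0 = - Im (W k0) / Im (d k0)"
  have t0e: "t0 * Im (d k0) = - Im (W k0)" using dk by (simp add: t0_def)
  have "\<beta> * Im (d k0) \<le> t0 * Im (d k0)" using ib t0e by simp
  then have t0b: "\<beta> \<le> t0" using dk by (simp add: mult_le_cancel_right)
  have "t0 * Im (d k0) < 1 * Im (d k0)" using t0e m' by simp
  then have t01: "t0 < 1" using dk by (simp add: mult_less_cancel_right)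
  define x0 where "x0 = W k0 + complex_of_real t0 * d k0"
  have xE: "x0 \<in> E k0" unfolding x0_def edge_param using t0b t01 ab by (intro exI[of _ t0]) auto
  have xIm: "Im x0 = 0" unfolding x0_def using t0e by simp
  have "x0 = -(1/2) \<or> x0 = 1/2" using chord[OF xE xIm _ m] dk by simp
  moreover have "x0 \<noteq> -(1/2)" using orient1[OF xE] dk by force
  ultimately have x0: "x0 = 1/2" by simp
  have at: "t0 - \<alpha> > 0" using t0b ab by simp
  have "W k0 + complex_of_real \<alpha> * d k0 = x0 - complex_of_real (t0 - \<alpha>) * d k0"
    unfolding x0_def of_real_diff by algebra
  then have "cmod (1/2 - complex_of_real (t0 - \<alpha>) * d k0) \<le> 1/2" using ball[OF aS] x0 by simp
  then have re: "Re (d k0) > 0" using thales2[OF _ at d_nz[of k0]] by simp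
  show False
  proof (cases "Im (W (k0+2)) \<le> 0")
    case True
    show False using pside[of 1 k0] True m re dk by (simp add: ac_simps)
  next
    case F1: False
    show False
    proof (cases "Im (W (k0+3)) \<le> 0")
      case True
      have e: "k0 + 2 + 1 = k0 + 3" by simp
      show False using pside[of 2 k0] True F1 m re dk unfolding e by (simp add: ac_simps)
    next
      case False
      have "S \<inter> E (k0+1) = {}" using noS[of "k0+1"] F1 m by (simp add: ac_simps)
      moreover have "S \<inter> E (k0+2) = {}" using noS[of "k0+2"] F1 False by (simp add: ac_simps)
      ultimately show False using pair_cases[of "k0+1"] by (simp add: ac_simps)
    qed
  qed
qed

lemma two_params:
  assumes "card (S \<inter> E k) = 2"
  shows "\<exists>\<alpha> \<beta>. 0 \<le> \<alpha> \<and> \<alpha> < \<beta> \<and> \<beta> \<le> 1 \<and> W k + complex_of_real \<alpha> * d k \<in> S \<and> W k + complex_of_real \<beta> * d k \<in> S"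
proof -
  obtain x z where xz: "x \<noteq> z" "S \<inter> E k = {x, z}" using assms by (auto simp: card_2_iff)
  then have "x \<in> S" "x \<in> E k" "z \<in> S" "z \<in> E k" by auto
  then obtain a b where a: "0 \<le> a" "a \<le> 1" "x = W k + complex_of_real a * d k"
    and b: "0 \<le> b" "b \<le> 1" "z = W k + complex_of_real b * d k" by (auto simp: edge_param)
  have "a \<noteq> b" using xz(1) a(3) b(3) by auto
  then show ?thesis
  proof (cases "a < b")
    case True then show ?thesis using a b \<open>x \<in> S\<close> \<open>z \<in> S\<close> by blast
  next
    case False then have "b < a" using \<open>a \<noteq> b\<close> by simp
    then show ?thesis using a b \<open>x \<in> S\<close> \<open>z \<in> S\<close> by blast
  qed
qed

lemma caseI: "Im (W m) > 0 \<Longrightarrow> False"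
proof -
  assume m: "Im (W m) > 0"
  have "card (S \<inter> E (m-1)) = 2 \<or> card (S \<inter> E m) = 2" using pair_cases[of "m-1"] by simp
  then show False
  proof
    assume "card (S \<inter> E (m-1)) = 2"
    then obtain \<alpha> \<beta> where "0 \<le> \<alpha>" "\<alpha> < \<beta>" "\<beta> \<le> 1" "W (m-1) + complex_of_real \<alpha> * d (m-1) \<in> S"
      "W (m-1) + complex_of_real \<beta> * d (m-1) \<in> S" using two_params by blast
    then show False using caseB[of "m-1" \<alpha> \<beta>] m by simp
  next
    assume "card (S \<inter> E m) = 2"
    then obtain \<alpha> \<beta> where "0 \<le> \<alpha>" "\<alpha> < \<beta>" "\<beta> \<le> 1" "W m + complex_of_real \<alpha> * d m \<in> S"
      "W m + complex_of_real \<beta> * d m \<in> S" using two_params by blast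
    then show False using caseA[of m \<alpha> \<beta>] m by simp
  qed
qed

end


locale core2 = core_ctx +
  assumes all: "\<And>k. Im (W k) \<le> 0"
begin

lemma vert_or_line:
  assumes "y \<in> S" "Im y = 0"
  shows "(\<exists>a. y = W a) \<or> (\<exists>i. Im (W i) = 0 \<and> Im (W (i+1)) = 0)"
proof -
  obtain i where "y \<in> E i" using S_on_edges assms(1) by blast
  then obtain t where t: "0 \<le> t" "t \<le> 1" "y = W i + complex_of_real t * d i" by (auto simp: edge_param)
  have A: "Im (W i) \<le> 0" "Im (W (i+1)) \<le> 0" using all by auto
  have e: "(1 - t) * Im (W i) + t * Im (W (i+1)) = 0" using assms(2) t(3) by (simp add: algebra_simps)
  show ?thesis
  proof (cases "t = 0")
    case True then show ?thesis using t(3) by auto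
  next
    case F1: False
    show ?thesis
    proof (cases "t = 1")
      case True then show ?thesis using t(3) by (auto intro!: exI[of _ "i+1"])
    next
      case False
      then have "0 < t" "t < 1" using F1 t by auto
      then have "(1 - t) * Im (W i) \<le> 0" "t * Im (W (i+1)) \<le> 0" using A
        by (simp_all add: mult_nonneg_nonpos)
      then have "(1 - t) * Im (W i) = 0" "t * Im (W (i+1)) = 0" using e by linarith+
      then have "Im (W i) = 0 \<and> Im (W (i+1)) = 0" using \<open>0 < t\<close> \<open>t < 1\<close> by simp
      then show ?thesis by blast
    qed
  qed
qed

lemma line_k:
  assumes "Im (W i) = 0" "Im (W (i+1)) = 0"
  shows "-(1/2) \<in> E i" "1/2 \<in> E i"
proof -
  have crz: "cr (d i) (y - W i) = 0" if "Im y = 0" for y using assms that by (simp add: cr_expand)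
  obtain j1 where "-(1/2) \<in> E j1" using S_on_edges pS by blast
  then show "-(1/2) \<in> E i" using on_line crz[of "-(1/2)"] by simp
  obtain j2 where "1/2 \<in> E j2" using S_on_edges qS by blast
  then show "1/2 \<in> E i" using on_line crz[of "1/2"] by simp
qed

lemma get_k: "\<exists>k. -(1/2) \<in> E k \<and> 1/2 \<in> E k \<and> Im (W k) = 0 \<and> Im (W (k+1)) = 0"
proof -
  have vp: "(\<exists>a. -(1/2) = W a) \<or> (\<exists>i. Im (W i) = 0 \<and> Im (W (i+1)) = 0)" using vert_or_line[OF pS] by simp
  have vq: "(\<exists>a. 1/2 = W a) \<or> (\<exists>i. Im (W i) = 0 \<and> Im (W (i+1)) = 0)" using vert_or_line[OF qS] by simp
  show ?thesis
  proof (cases "\<exists>i. Im (W i) = 0 \<and> Im (W (i+1)) = 0")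
    case True then show ?thesis using line_k by blast
  next
    case False
    then obtain a b where ab: "-(1/2) = W a" "1/2 = W b" using vp vq by blast
    define s where "s = (b - a) mod int n"
    have s0: "0 \<le> s" "s < int n" using npos by (simp_all add: s_def)
    have Wb: "W b = W (a + s)" by (rule W_modeq) (simp add: s_def mod_add_right_eq)
    have "s \<noteq> 0"
    proof
      assume "s = 0" then have "W b = W a" using Wb by simp
      then show False using ab by (simp add: complex_eq_iff)
    qed
    have Wl: "W (a + (int n - 1)) = W (a - 1)"
    proof (rule W_modeq)
      have "a + (int n - 1) = (a - 1) + int n" by simp
      then show "(a + (int n - 1)) mod int n = (a - 1) mod int n" by (simp only: mod_add_self2)
    qed
    have A: "cr (W (a+s) - W a) (W (a + (int n - 1)) - W a) = 4*\<rho>^2 * sin (pi*real_of_int s/real n) * sin (pi*real_of_int ((int n - 1) - s)/real n) * sin (pi*real_of_int (int n - 1)/real n)"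
      by (rule area)
    have h1: "W (a+s) = 1/2" by (simp only: Wb[symmetric] ab(2)[symmetric])
    have h2: "W a = -(1/2)" using ab(1)[symmetric] .
    have "cr (W (a+s) - W a) (W (a + (int n - 1)) - W a) = Im (W (a - 1))"
      unfolding h1 h2 Wl by (simp add: cr_expand)
    then have le: "4*\<rho>^2 * sin (pi*real_of_int s/real n) * sin (pi*real_of_int ((int n - 1) - s)/real n) * sin (pi*real_of_int (int n - 1)/real n) \<le> 0"
      using A all[of "a-1"] by simp
    have sn: "s = int n - 1"
    proof (rule ccontr)
      assume "s \<noteq> int n - 1"
      then have "s < int n - 1" using s0 by simp
      then have "sin (pi*real_of_int s/real n) > 0" "sin (pi*real_of_int ((int n - 1) - s)/real n) > 0"
        "sin (pi*real_of_int (int n - 1)/real n) > 0"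
        using \<open>s \<noteq> 0\<close> s0 nint sin_pos_frac[of s] sin_pos_frac[of "int n - 1 - s"] sin_pos_frac[of "int n - 1"]
        by auto
      moreover have "4*\<rho>^2 > 0" using rho by simp
      ultimately have "4*\<rho>^2 * sin (pi*real_of_int s/real n) * sin (pi*real_of_int ((int n - 1) - s)/real n) * sin (pi*real_of_int (int n - 1)/real n) > 0"
        by (intro mult_pos_pos) auto
      then show False using le by simp
    qed
    have "W b = W (a - 1)" using Wb sn Wl by simp
    then have e: "1/2 = W (a-1)" "-(1/2) = W (a - 1 + 1)" using ab by (simp_all only: diff_add_cancel)
    have "-(1/2) \<in> E (a-1)" "1/2 \<in> E (a-1)" using e by (simp_all only: ends_in_segment)
    moreover have "Im (W (a-1)) = 0" "Im (W (a-1+1)) = 0" unfolding e(1)[symmetric] e(2)[symmetric] by simp_all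
    ultimately show ?thesis by blast
  qed
qed

end


context core2 begin

lemma caseII_final: False
proof -
  obtain k where pk: "-(1/2) \<in> E k" and qk: "1/2 \<in> E k" and i0: "Im (W k) = 0" and i1: "Im (W (k+1)) = 0"
    using get_k by blast
  have idk: "Im (d k) = 0" using i0 i1 by simp
  have "cr (d k) (W (k+2) - W k) > 0" by (rule supp_gen(2)) (use nint in auto)
  then have "Re (d k) * Im (W (k+2)) > 0" using i0 idk by (simp add: cr_expand)
  then have rdk: "Re (d k) < 0" using all[of "k+2"] by (simp add: zero_less_mult_iff)
  define lm where "lm = - Re (d k)"
  define \<mu> where "\<mu> = Re (W k)"
  have lam: "lm > 0" using rdk by (simp add: lm_def)
  have dk: "d k = complex_of_real (-lm)" using idk by (simp add: lm_def complex_eq_iff)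
  have Wk: "W k = complex_of_real \<mu>" using i0 by (simp add: \<mu>_def complex_eq_iff)
  obtain t1 where t1: "0 \<le> t1" "t1 \<le> 1" "1/2 = W k + complex_of_real t1 * d k" using qk by (auto simp: edge_param)
  obtain t2 where t2: "0 \<le> t2" "t2 \<le> 1" "-(1/2) = W k + complex_of_real t2 * d k" using pk by (auto simp: edge_param)
  have h1: "1/2 = W k + complex_of_real t1 * complex_of_real (-lm)" using t1(3) by (simp only: dk)
  have "1/2 = \<mu> - t1 * lm" using arg_cong[OF h1, of Re] by (simp add: \<mu>_def)
  moreover have "t1 * lm \<ge> 0" using t1 lam by simp
  ultimately have mu: "\<mu> \<ge> 1/2" by linarith
  have h2: "-(1/2) = W k + complex_of_real t2 * complex_of_real (-lm)" using t2(3) by (simp only: dk)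
  have "-(1/2) = \<mu> - t2 * lm" using arg_cong[OF h2, of Re] by (simp add: \<mu>_def)
  moreover have "t2 * lm \<le> lm" using t2 lam by (simp add: mult_left_le_one_le)
  ultimately have ml: "\<mu> < lm" by linarith
  define \<alpha> where "\<alpha> = 2*pi/real n"
  have ca: "cos \<alpha> > 0"
  proof (rule cos_gt_zero)
    have n: "real n \<ge> 5" using n5 by simp
    then show "\<alpha> < pi/2" using pi_gt_zero unfolding \<alpha>_def by (simp add: field_simps)
    show "\<alpha> > 0" using pi_gt_zero npos unfolding \<alpha>_def by simp
  qed
  have sc: "sin \<alpha> ^ 2 + cos \<alpha> ^ 2 = 1" by simp
  have r1: "d k = cis \<alpha> * d (k-1)" using rot_t[of "k-1" 1] unfolding \<alpha>_def by simp
  have r2: "d k = cis (2*\<alpha>) * d (k-2)" using rot_t[of "k-2" 2] unfolding \<alpha>_def by (simp add: algebra_simps)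
  have dk1: "d (k-1) = cis (-\<alpha>) * d k" unfolding r1 by (simp add: cis_mult)
  have dk2: "d (k-2) = cis (-(2*\<alpha>)) * d k" unfolding r2 by (simp add: cis_mult)
  have claim1: "S \<inter> E (k-1) \<subseteq> {W k}"
  proof
    fix s assume s: "s \<in> S \<inter> E (k-1)"
    then obtain \<sigma> where \<sigma>: "0 \<le> \<sigma>" "\<sigma> \<le> 1" "s = W (k-1) + complex_of_real \<sigma> * d (k-1)" by (auto simp: seg_param)
    define \<kappa> where "\<kappa> = 1 - \<sigma>"
    have sk: "s = W k - complex_of_real \<kappa> * d (k-1)" unfolding \<sigma>(3) \<kappa>_def of_real_diff by (simp add: algebra_simps)
    have res: "Re s = \<mu> + \<kappa> * lm * cos \<alpha>" "Im s = - (\<kappa> * lm * sin \<alpha>)"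
      unfolding sk dk1 unfolding dk unfolding Wk by (simp_all add: cis.sel)
    have "(cmod s)^2 = (\<mu> + \<kappa> * lm * cos \<alpha>)^2 + (\<kappa> * lm * sin \<alpha>)^2" by (simp add: cmod_power2 res)
    also have "\<dots> = \<mu>^2 + 2 * \<mu> * \<kappa> * lm * cos \<alpha> + (\<kappa> * lm)^2" using sc by algebra
    finally have cs: "(cmod s)^2 = \<mu>^2 + 2 * \<mu> * \<kappa> * lm * cos \<alpha> + (\<kappa> * lm)^2" .
    have "(cmod s)^2 \<le> (1/2)^2" using ball[of s] s by (intro power_mono) auto
    moreover have "\<mu>^2 \<ge> (1/2)^2" using mu by (intro power_mono) auto
    ultimately have "2 * \<mu> * \<kappa> * lm * cos \<alpha> + (\<kappa> * lm)^2 \<le> 0" using cs by simp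
    moreover have "2 * \<mu> * \<kappa> * lm * cos \<alpha> \<ge> 0" using mu \<sigma>(2) lam ca
      by (intro mult_nonneg_nonneg) (auto simp: \<kappa>_def)
    ultimately have "(\<kappa> * lm)^2 \<le> 0" by linarith
    then have "\<kappa> * lm = 0" by (metis power2_less_0 not_le_imp_less order_antisym zero_eq_power2 zero_le_power2)
    then have "\<kappa> = 0" using lam by simp
    then show "s \<in> {W k}" using sk by simp
  qed
  have c1: "card (S \<inter> E (k-1)) \<noteq> 2"
  proof
    assume "card (S \<inter> E (k-1)) = 2"
    moreover have "card (S \<inter> E (k-1)) \<le> 1" using card_mono[OF _ claim1] by simp
    ultimately show False by simp
  qed
  have "card (S \<inter> E (k-2)) = 2" using pair_cases[of "k-2"] c1 by simp
  then obtain s where s: "s \<in> S" "s \<in> E (k-2)" using card2_ne by blast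
  then obtain \<sigma> where \<sigma>: "0 \<le> \<sigma>" "\<sigma> \<le> 1" "s = W (k-2) + complex_of_real \<sigma> * d (k-2)" by (auto simp: seg_param)
  define \<kappa> where "\<kappa> = 1 - \<sigma>"
  have k01: "0 \<le> \<kappa>" "\<kappa> \<le> 1" using \<sigma> by (simp_all add: \<kappa>_def)
  have sk: "s = W k - d (k-1) - complex_of_real \<kappa> * d (k-2)"
    unfolding \<sigma>(3) \<kappa>_def of_real_diff by (simp add: algebra_simps)
  have res: "Re s = \<mu> + lm * cos \<alpha> + \<kappa> * lm * cos (2*\<alpha>)" "Im s = - (lm * sin \<alpha> + \<kappa> * lm * sin (2*\<alpha>))"
    unfolding sk dk1 dk2 unfolding dk unfolding Wk by (simp_all add: cis.sel algebra_simps)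
  have c2: "cos (2*\<alpha>) = 2 * cos \<alpha> ^ 2 - 1" by (simp add: cos_double_cos)
  have s2: "sin (2*\<alpha>) = 2 * sin \<alpha> * cos \<alpha>" by (rule sin_double)
  have "(cmod s)^2 = (\<mu> + lm * cos \<alpha> + \<kappa> * lm * cos (2*\<alpha>))^2 + (lm * sin \<alpha> + \<kappa> * lm * sin (2*\<alpha>))^2"
    unfolding cmod_power2 res by (simp only: power2_minus)
  also have "\<dots> = \<mu>^2 + (2*\<mu>*lm*cos \<alpha> + 4*\<mu>*lm*\<kappa>*(cos \<alpha>)^2 + lm^2*((1-\<kappa>)^2 + 2*\<kappa>*cos \<alpha>) + 2*lm*\<kappa>*(lm - \<mu>))"
    unfolding c2 s2 using sc by algebra
  finally have cs: "(cmod s)^2 = \<mu>^2 + (2*\<mu>*lm*cos \<alpha> + 4*\<mu>*lm*\<kappa>*(cos \<alpha>)^2 + lm^2*((1-\<kappa>)^2 + 2*\<kappa>*cos \<alpha>) + 2*lm*\<kappa>*(lm - \<mu>))" .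
  have "2*\<mu>*lm*cos \<alpha> > 0" using mu lam ca by simp
  moreover have "4*\<mu>*lm*\<kappa>*(cos \<alpha>)^2 \<ge> 0" using mu lam k01 by simp
  moreover have "lm^2*((1-\<kappa>)^2 + 2*\<kappa>*cos \<alpha>) \<ge> 0" using k01 ca by simp
  moreover have "2*lm*\<kappa>*(lm - \<mu>) \<ge> 0" using lam k01 ml by simp
  ultimately have "(cmod s)^2 > \<mu>^2" using cs by linarith
  moreover have "(cmod s)^2 \<le> (1/2)^2" using ball[OF s(1)] by (intro power_mono) auto
  moreover have "\<mu>^2 \<ge> (1/2)^2" using mu by (intro power_mono) auto
  ultimately show False by simp
qed

end


lemma perp_form:
  fixes x u :: complex
  assumes "inner x u = 0" "u \<noteq> 0"
  shows "x = complex_of_real ((Im x * Re u - Re x * Im u) / (cmod u)^2) * (\<i> * u)"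
proof -
  have h: "Re x * Re u + Im x * Im u = 0" using assms(1) by (simp add: inner_complex_def)
  have n: "(Re u)^2 + (Im u)^2 \<noteq> 0" using assms(2) by (simp add: complex_eq_iff sum_power2_eq_zero_iff)
  show ?thesis unfolding complex_eq_iff cmod_power2 using n h
    by (simp add: field_simps power2_eq_square) algebra
qed

lemma perp_pm:
  fixes x y u :: complex
  assumes "inner x u = 0" "inner y u = 0" "u \<noteq> 0" "cmod x = cmod y"
  shows "x = y \<or> x = - y"
proof -
  define a where "a = (Im x * Re u - Re x * Im u) / (cmod u)^2"
  define b where "b = (Im y * Re u - Re y * Im u) / (cmod u)^2"
  have x: "x = complex_of_real a * (\<i> * u)" unfolding a_def by (rule perp_form[OF assms(1,3)])
  have y: "y = complex_of_real b * (\<i> * u)" unfolding b_def by (rule perp_form[OF assms(2,3)])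
  have "\<bar>a\<bar> * cmod u = \<bar>b\<bar> * cmod u" using assms(4) unfolding x y by (simp add: norm_mult)
  then have "\<bar>a\<bar> = \<bar>b\<bar>" using assms(3) by simp
  then have "a = b \<or> a = - b" by linarith
  then show ?thesis unfolding x y by auto
qed



lemma near_ev:
  fixes s z0 u1 t :: complex
  assumes "cmod (s - z0) < r"
  shows "eventually (\<lambda>e. cmod (s - (z0 - e *\<^sub>R u1 + e^2 *\<^sub>R t)) < r) (at_right 0)"
proof -
  have "((\<lambda>e. cmod (s - (z0 - e *\<^sub>R u1 + e^2 *\<^sub>R t))) \<longlongrightarrow> cmod (s - (z0 - 0 *\<^sub>R u1 + (0::real)^2 *\<^sub>R t))) (at_right 0)"
    by (intro tendsto_intros)
  then have "((\<lambda>e. cmod (s - (z0 - e *\<^sub>R u1 + e^2 *\<^sub>R t))) \<longlongrightarrow> cmod (s - z0)) (at_right 0)" by simp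
  then show ?thesis using assms by (rule order_tendstoD(2))
qed

lemma normsq_expand:
  fixes w u1 t :: complex
  shows "(cmod (w + e *\<^sub>R (u1 - e *\<^sub>R t)))^2 = (cmod w)^2 + 2*e*inner w u1 - 2*e^2*inner w t + e^2 * (cmod (u1 - e *\<^sub>R t))^2"
  unfolding power2_norm_eq_inner
  by (simp add: inner_add_left inner_add_right inner_diff_left inner_diff_right inner_commute power2_eq_square algebra_simps)

lemma ev_B1:
  fixes w u1 t :: complex
  assumes r: "r > 0" and w: "cmod w = r" and g: "inner w u1 < 0" and u1: "cmod u1 \<le> r" and t: "cmod t \<le> r"
  shows "eventually (\<lambda>e. cmod (w + e *\<^sub>R (u1 - e *\<^sub>R t)) < r) (at_right 0)"
proof -
  define \<gamma> where "\<gamma> = - inner w u1"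
  have g0: "\<gamma> > 0" using g by (simp add: \<gamma>_def)
  define K where "K = 6 * r^2"
  have K0: "K > 0" using r by (simp add: K_def)
  have "eventually (\<lambda>e. 0 < e \<and> e < min 1 (\<gamma> / K)) (at_right (0::real))"
    using g0 K0 by (simp add: eventually_at_right_field) (metis divide_pos_pos less_numeral_extra(1) min_less_iff_conj)
  then show ?thesis
  proof (rule eventually_mono)
    fix e :: real assume e: "0 < e \<and> e < min 1 (\<gamma> / K)"
    have n1: "cmod (u1 - e *\<^sub>R t) \<le> 2 * r"
    proof -
      have "cmod (u1 - e *\<^sub>R t) \<le> cmod u1 + cmod (e *\<^sub>R t)" by (rule norm_triangle_ineq4)
      also have "cmod (e *\<^sub>R t) = e * cmod t" using e by simp
      also have "e * cmod t \<le> r" using e t r by (smt (verit) mult_left_le_one_le norm_ge_zero)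
      finally show ?thesis using u1 by simp
    qed
    have n1sq: "(cmod (u1 - e *\<^sub>R t))^2 \<le> 4 * r^2"
      using power_mono[OF n1 norm_ge_zero, of 2] by (simp add: power_mult_distrib)
    have it: "- inner w t \<le> r^2"
    proof -
      have "\<bar>inner w t\<bar> \<le> cmod w * cmod t" by (rule Cauchy_Schwarz_ineq2)
      also have "\<dots> \<le> r * r" using w t r by (simp add: mult_left_mono)
      finally show ?thesis by (simp add: power2_eq_square)
    qed
    have "(cmod (w + e *\<^sub>R (u1 - e *\<^sub>R t)))^2 = r^2 - 2*e*\<gamma> + e^2 * (-2 * inner w t + (cmod (u1 - e *\<^sub>R t))^2)"
      unfolding normsq_expand w \<gamma>_def by (simp add: algebra_simps)
    also have "\<dots> \<le> r^2 - 2*e*\<gamma> + e^2 * K"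
      using it n1sq by (intro add_left_mono mult_left_mono) (auto simp: K_def)
    also have "\<dots> < r^2"
    proof -
      have "e * K < \<gamma>" using e K0 by (simp add: less_divide_eq mult.commute)
      then have h1: "e * (e * K) < e * \<gamma>" using e by simp
      have h2: "e^2 * K = e * (e * K)" by (simp add: power2_eq_square)
      have "e * \<gamma> > 0" using e g0 by simp
      then show ?thesis using h1 h2 by linarith
    qed
    finally have "(cmod (w + e *\<^sub>R (u1 - e *\<^sub>R t)))^2 < r^2" .
    then show "cmod (w + e *\<^sub>R (u1 - e *\<^sub>R t)) < r" using r by (simp add: power_less_imp_less_base)
  qed
qed

lemma ev_B2:
  fixes t u1 :: complex
  assumes r: "r > 0" and w: "cmod t = r" and g: "inner t u1 = 0" and u1: "cmod u1 = r/2"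
  shows "eventually (\<lambda>e. cmod (t + e *\<^sub>R (u1 - e *\<^sub>R t)) < r) (at_right 0)"
proof -
  have "eventually (\<lambda>e. 0 < e \<and> e < 1) (at_right (0::real))"
    by (simp add: eventually_at_right_field) (metis less_numeral_extra(1))
  then show ?thesis
  proof (rule eventually_mono)
    fix e :: real assume e: "0 < e \<and> e < 1"
    have "(cmod (u1 - e *\<^sub>R t))^2 = (cmod u1)^2 + e^2 * (cmod t)^2"
      unfolding power2_norm_eq_inner using g by (simp add: inner_diff_left inner_diff_right inner_commute power2_eq_square algebra_simps)
    then have a: "(cmod (u1 - e *\<^sub>R t))^2 = r^2/4 + e^2 * r^2" using u1 w by (simp add: power_divide)
    have "(cmod (t + e *\<^sub>R (u1 - e *\<^sub>R t)))^2 = r^2 - 2*e^2*r^2 + e^2 * (r^2/4 + e^2 * r^2)"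
      unfolding normsq_expand a w using g by (simp add: power2_norm_eq_inner[symmetric] w)
    also have "\<dots> = r^2 - e^2 * r^2 * (7/4 - e^2)" by (simp add: algebra_simps power2_eq_square)
    also have "\<dots> < r^2"
    proof -
      have "e^2 < 1" using e by (simp add: power_less_one_iff abs_less_iff)
      then have "7/4 - e^2 > 0" by simp
      moreover have "e^2 * r^2 > 0" using e r by simp
      ultimately show ?thesis by simp
    qed
    finally have "(cmod (t + e *\<^sub>R (u1 - e *\<^sub>R t)))^2 < r^2" .
    then show "cmod (t + e *\<^sub>R (u1 - e *\<^sub>R t)) < r" using r by (simp add: power_less_imp_less_base)
  qed
qed



lemma sed_pair:
  fixes S :: "complex set" and z0 :: complex and r :: real and u :: complex
  assumes fin: "finite S" and ne: "S \<noteq> {}" and sed: "is_SED S z0 r" and z0S: "z0 \<notin> S"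
    and u: "u \<noteq> 0" and half: "\<And>s. s \<in> S \<Longrightarrow> inner (s - z0) u \<le> 0"
  shows "r > 0 \<and> (\<exists>a. a \<in> S \<and> 2*z0 - a \<in> S \<and> inner (a - z0) u = 0 \<and> cmod (a - z0) = r)"
proof -
  have sub: "S \<subseteq> cball z0 r" and mini: "\<And>c' r'. S \<subseteq> cball c' r' \<Longrightarrow> r \<le> r'"
    using sed unfolding is_SED_def by auto
  have inb: "cmod (s - z0) \<le> r" if "s \<in> S" for s using sub that by (auto simp: dist_norm norm_minus_commute)
  obtain s0 where s0: "s0 \<in> S" using ne by blast
  have "s0 \<noteq> z0" using s0 z0S by auto
  then have r0: "r > 0" using inb[OF s0] by (smt (verit) eq_iff_diff_eq_0 zero_less_norm_iff)
  show ?thesis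
  proof (rule ccontr)
    assume "\<not> ?thesis"
    then have H: "\<And>a. a \<in> S \<Longrightarrow> inner (a - z0) u = 0 \<Longrightarrow> cmod (a - z0) = r \<Longrightarrow> 2*z0 - a \<notin> S"
      using r0 by blast
    define u1 where "u1 = (r / (2 * cmod u)) *\<^sub>R u"
    have nu1: "cmod u1 = r/2" using u r0 by (simp add: u1_def)
    have iu1: "inner w u1 = (r / (2 * cmod u)) * inner w u" for w by (simp add: u1_def)
    have cpos: "r / (2 * cmod u) > 0" using u r0 by simp
    define t where "t = (if \<exists>a. a \<in> S \<and> inner (a - z0) u = 0 \<and> cmod (a - z0) = r
                         then (SOME a. a \<in> S \<and> inner (a - z0) u = 0 \<and> cmod (a - z0) = r) - z0 else 0)"
    have nt: "cmod t \<le> r" using r0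
      by (auto simp: t_def dest!: someI_ex[where P = "\<lambda>a. a \<in> S \<and> inner (a - z0) u = 0 \<and> cmod (a - z0) = r"])
    define z' where "z' e = z0 - e *\<^sub>R u1 + e^2 *\<^sub>R t" for e :: real
    have zz: "s - z' e = (s - z0) + e *\<^sub>R (u1 - e *\<^sub>R t)" for s e
      by (simp add: z'_def algebra_simps power2_eq_square)
    have ev: "eventually (\<lambda>e. cmod (s - z' e) < r) (at_right 0)" if sS: "s \<in> S" for s
    proof (cases "cmod (s - z0) < r")
      case True then show ?thesis unfolding z'_def by (rule near_ev)
    next
      case False
      then have eq: "cmod (s - z0) = r" using inb[OF sS] by simp
      show ?thesis
      proof (cases "inner (s - z0) u < 0")
        case True
        have "(r / (2 * cmod u)) * inner (s - z0) u < 0" using cpos True by (rule mult_pos_neg)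
        then have "inner (s - z0) u1 < 0" unfolding iu1 .
        from ev_B1[OF r0 eq this _ nt] nu1 r0 show ?thesis unfolding zz by simp
      next
        case False
        then have i0: "inner (s - z0) u = 0" using half[OF sS] by simp
        have ex: "\<exists>a. a \<in> S \<and> inner (a - z0) u = 0 \<and> cmod (a - z0) = r" using sS i0 eq by blast
        define a where "a = (SOME a. a \<in> S \<and> inner (a - z0) u = 0 \<and> cmod (a - z0) = r)"
        have a: "a \<in> S" "inner (a - z0) u = 0" "cmod (a - z0) = r"
          using someI_ex[OF ex] unfolding a_def by auto
        have ta: "t = a - z0" using ex unfolding t_def a_def by simp
        have "s - z0 = a - z0 \<or> s - z0 = - (a - z0)" using perp_pm[OF i0 a(2) u] eq a(3) by simp
        moreover have "s - z0 \<noteq> - (a - z0)"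
        proof
          assume "s - z0 = - (a - z0)"
          then have "s = 2*z0 - a" by (simp add: algebra_simps)
          then show False using H[OF a] sS by simp
        qed
        ultimately have st: "s - z0 = t" using ta by simp
        have "inner t u1 = 0" using i0 st iu1[of "s - z0"] by simp
        from ev_B2[OF r0 _ this nu1] eq st show ?thesis unfolding zz st by simp
      qed
    qed
    have "eventually (\<lambda>e. \<forall>s\<in>S. cmod (s - z' e) < r) (at_right 0)"
      using ev fin by (simp add: eventually_ball_finite)
    then have "\<exists>e. \<forall>s\<in>S. cmod (s - z' e) < r"
      using eventually_happens trivial_limit_at_right_real by blast
    then obtain e where e: "\<forall>s\<in>S. cmod (s - z' e) < r" by blast
    define r' where "r' = Max ((\<lambda>s. cmod (s - z' e)) ` S)"
    have "r' < r" unfolding r'_def using fin ne e by (simp add: Max_less_iff)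
    moreover have "S \<subseteq> cball (z' e) r'"
    proof
      fix s assume "s \<in> S"
      then have "cmod (s - z' e) \<le> r'" unfolding r'_def using fin by (intro Max_ge) auto
      then show "s \<in> cball (z' e) r'" by (simp add: dist_norm norm_minus_commute)
    qed
    then have "r \<le> r'" by (rule mini)
    ultimately show False by simp
  qed
qed



context core_ctx begin
lemma core_false: False
proof (cases "\<exists>m. Im (W m) > 0")
  case True then show ?thesis using caseI by blast
next
  case False
  then have all: "\<And>k. Im (W k) \<le> 0" by (meson not_less)
  interpret core2 n c \<rho> th S
    by (rule core2.intro[OF core_ctx_axioms]) (unfold_locales, rule all)
  show False by (rule caseII_final)
qed
end

lemma aff_seg:
  fixes \<alpha> \<beta> :: complex assumes "\<alpha> \<noteq> 0"
  shows "\<alpha> * x + \<beta> \<in> closed_segment (\<alpha> * a + \<beta>) (\<alpha> * b + \<beta>) \<longleftrightarrow> x \<in> closed_segment a b"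
    and "\<alpha> * x + \<beta> \<in> open_segment (\<alpha> * a + \<beta>) (\<alpha> * b + \<beta>) \<longleftrightarrow> x \<in> open_segment a b"
proof -
  have e: "\<alpha> * x + \<beta> = \<alpha> * a + \<beta> + complex_of_real t * (\<alpha> * b + \<beta> - (\<alpha> * a + \<beta>)) \<longleftrightarrow>
           x = a + complex_of_real t * (b - a)" for t
  proof -
    have "\<alpha> * a + \<beta> + complex_of_real t * (\<alpha> * b + \<beta> - (\<alpha> * a + \<beta>)) = \<alpha> * (a + complex_of_real t * (b - a)) + \<beta>"
      by (simp add: algebra_simps)
    then show ?thesis using assms by simp
  qed
  have ne: "\<alpha> * a + \<beta> \<noteq> \<alpha> * b + \<beta> \<longleftrightarrow> a \<noteq> b" using assms by simp
  show "\<alpha> * x + \<beta> \<in> closed_segment (\<alpha> * a + \<beta>) (\<alpha> * b + \<beta>) \<longleftrightarrow> x \<in> closed_segment a b"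
    unfolding seg_param e ..
  show "\<alpha> * x + \<beta> \<in> open_segment (\<alpha> * a + \<beta>) (\<alpha> * b + \<beta>) \<longleftrightarrow> x \<in> open_segment a b"
    unfolding oseg_param e ne ..
qed

lemma aff_img_int:
  fixes \<alpha> \<beta> :: complex assumes "\<alpha> \<noteq> 0"
  shows "(\<lambda>x. \<alpha> * x + \<beta>) ` S \<inter> closed_segment (\<alpha> * a + \<beta>) (\<alpha> * b + \<beta>) = (\<lambda>x. \<alpha> * x + \<beta>) ` (S \<inter> closed_segment a b)"
    and "(\<lambda>x. \<alpha> * x + \<beta>) ` S \<inter> open_segment (\<alpha> * a + \<beta>) (\<alpha> * b + \<beta>) = (\<lambda>x. \<alpha> * x + \<beta>) ` (S \<inter> open_segment a b)"
  using aff_seg[OF assms] by auto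

lemma Wv_aff:
  fixes \<alpha> \<beta> :: complex assumes "\<alpha> \<noteq> 0"
  shows "\<alpha> * Wv n c \<rho> th k + \<beta> = Wv n (\<alpha> * c + \<beta>) (\<rho> * cmod \<alpha>) (th + Arg \<alpha>) k"
proof -
  have a: "\<alpha> = complex_of_real (cmod \<alpha>) * cis (Arg \<alpha>)" using rcis_cmod_Arg[of \<alpha>] by (simp add: rcis_def)
  have "th + Arg \<alpha> + 2*pi*real_of_int k/real n = (th + 2*pi*real_of_int k/real n) + Arg \<alpha>" by simp
  then have "cis (th + Arg \<alpha> + 2*pi*real_of_int k/real n) = cis (th + 2*pi*real_of_int k/real n) * cis (Arg \<alpha>)"
    by (simp only: cis_mult)
  moreover have "\<alpha> * (complex_of_real \<rho> * cis (th + 2*pi*real_of_int k/real n)) =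
     complex_of_real (cmod \<alpha>) * cis (Arg \<alpha>) * (complex_of_real \<rho> * cis (th + 2*pi*real_of_int k/real n))"
    using a by metis
  ultimately show ?thesis unfolding Wv_def by (simp add: algebra_simps)
qed

lemma prp_affine:
  fixes \<alpha> \<beta> :: complex
  assumes P: "prp n c \<rho> th S" and a: "\<alpha> \<noteq> 0"
  shows "prp n (\<alpha> * c + \<beta>) (\<rho> * cmod \<alpha>) (th + Arg \<alpha>) ((\<lambda>x. \<alpha> * x + \<beta>) ` S)"
proof -
  interpret prp n c \<rho> th S by (rule P)
  let ?f = "\<lambda>x. \<alpha> * x + \<beta>"
  have inj: "inj_on ?f A" for A using a by (auto simp: inj_on_def)
  have Wf: "Wv n (\<alpha> * c + \<beta>) (\<rho> * cmod \<alpha>) (th + Arg \<alpha>) k = ?f (W k)" for k using Wv_aff[OF a] by simp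
  show ?thesis
  proof (unfold_locales)
    show "n \<ge> 5" by (rule n5)
    show "\<rho> * cmod \<alpha> > 0" using rho a by simp
    show "finite (?f ` S)" using finS by simp
    show "card (?f ` S) = n" using card_image[OF inj] cardS by simp
    fix k :: int
    have cE: "card (?f ` S \<inter> closed_segment (?f (W i)) (?f (W j))) = card (S \<inter> closed_segment (W i) (W j))" for i j
      unfolding aff_img_int[OF a] using card_image[OF inj] by simp
    have oE: "?f ` S \<inter> open_segment (?f (W i)) (?f (W j)) = {} \<longleftrightarrow> S \<inter> open_segment (W i) (W j) = {}" for i j
      unfolding aff_img_int[OF a] by simp
    show "(card (?f ` S \<inter> closed_segment (Wv n (\<alpha> * c + \<beta>) (\<rho> * cmod \<alpha>) (th + Arg \<alpha>) k) (Wv n (\<alpha> * c + \<beta>) (\<rho> * cmod \<alpha>) (th + Arg \<alpha>) (k + 1))) = 2 \<and>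
         ?f ` S \<inter> open_segment (Wv n (\<alpha> * c + \<beta>) (\<rho> * cmod \<alpha>) (th + Arg \<alpha>) (k + 1)) (Wv n (\<alpha> * c + \<beta>) (\<rho> * cmod \<alpha>) (th + Arg \<alpha>) (k + 1 + 1)) = {}) \<or>
        (card (?f ` S \<inter> closed_segment (Wv n (\<alpha> * c + \<beta>) (\<rho> * cmod \<alpha>) (th + Arg \<alpha>) (k + 1)) (Wv n (\<alpha> * c + \<beta>) (\<rho> * cmod \<alpha>) (th + Arg \<alpha>) (k + 1 + 1))) = 2 \<and>
         ?f ` S \<inter> open_segment (Wv n (\<alpha> * c + \<beta>) (\<rho> * cmod \<alpha>) (th + Arg \<alpha>) k) (Wv n (\<alpha> * c + \<beta>) (\<rho> * cmod \<alpha>) (th + Arg \<alpha>) (k + 1)) = {})"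
      unfolding Wf cE oE by (rule pair)
  qed
qed



lemma Wv_cong: "n > 0 \<Longrightarrow> a mod int n = b mod int n \<Longrightarrow> Wv n c \<rho> th a = Wv n c \<rho> th b"
  by (metis W_mod)

lemma reg_vertex_Wv: "reg_vertex n c r th m = Wv n c r th (int m)"
  by (simp add: reg_vertex_def Wv_def)

lemma prp_of_pre_regular:
  assumes fin: "finite S" and c4: "card S > 4" and rho: "r > 0"
    and pr: "\<forall>k < card S. (card (S \<inter> reg_edge (card S) c r th k) = 2 \<and> S \<inter> reg_edge_int (card S) c r th (Suc k mod card S) = {}) \<or>
          (card (S \<inter> reg_edge (card S) c r th (Suc k mod card S)) = 2 \<and> S \<inter> reg_edge_int (card S) c r th k = {})"
  shows "prp (card S) c r th S"
proof (unfold_locales)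
  show "card S \<ge> 5" using c4 by simp
  show "r > 0" by (rule rho)
  show "finite S" by (rule fin)
  show "card S = card S" ..
  fix k :: int
  define n where "n = card S"
  have n0: "n > 0" using c4 n_def by simp
  define k' where "k' = nat (k mod int n)"
  have k'n: "k' < n" using n0 by (simp add: k'_def nat_less_iff)
  have ik: "int k' = k mod int n" using n0 by (simp add: k'_def)
  have isk: "int (Suc k' mod n) = (k + 1) mod int n"
  proof -
    have "int (Suc k' mod n) = (int k' + 1) mod int n" by (simp add: zmod_int ac_simps)
    also have "\<dots> = (k mod int n + 1) mod int n" using ik by simp
    also have "\<dots> = (k + 1) mod int n" by (rule mod_add_left_eq)
    finally show ?thesis .
  qed
  have v1: "Wv n c r th (int k') = Wv n c r th k" by (rule Wv_cong[OF n0]) (simp add: ik)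
  have v2: "Wv n c r th (int k' + 1) = Wv n c r th (k+1)" by (rule Wv_cong[OF n0]) (simp add: ik mod_add_left_eq)
  have v3: "Wv n c r th (int (Suc k' mod n)) = Wv n c r th (k+1)" by (rule Wv_cong[OF n0]) (simp add: isk)
  have v4: "Wv n c r th (int (Suc k' mod n) + 1) = Wv n c r th (k+1+1)" by (rule Wv_cong[OF n0]) (simp add: isk mod_add_left_eq)
  have re: "reg_edge n c r th m = closed_segment (Wv n c r th (int m)) (Wv n c r th (int m + 1))" for m
    by (simp add: reg_edge_def reg_vertex_Wv ac_simps)
  have ri: "reg_edge_int n c r th m = open_segment (Wv n c r th (int m)) (Wv n c r th (int m + 1))" for m
    by (simp add: reg_edge_int_def reg_vertex_Wv ac_simps)
  have "(card (S \<inter> reg_edge n c r th k') = 2 \<and> S \<inter> reg_edge_int n c r th (Suc k' mod n) = {}) \<or>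
          (card (S \<inter> reg_edge n c r th (Suc k' mod n)) = 2 \<and> S \<inter> reg_edge_int n c r th k' = {})"
    using pr k'n unfolding n_def by blast
  then show "(card (S \<inter> closed_segment (Wv (card S) c r th k) (Wv (card S) c r th (k + 1))) = 2 \<and>
         S \<inter> open_segment (Wv (card S) c r th (k + 1)) (Wv (card S) c r th (k + 1 + 1)) = {}) \<or>
        (card (S \<inter> closed_segment (Wv (card S) c r th (k + 1)) (Wv (card S) c r th (k + 1 + 1))) = 2 \<and>
         S \<inter> open_segment (Wv (card S) c r th k) (Wv (card S) c r th (k + 1)) = {})"
    unfolding re ri v1 v2 v3 v4 n_def[symmetric] .
qed

lemma inner_iD: "D \<noteq> 0 \<Longrightarrow> inner w (\<i> * D) = Im (w / D) * (cmod D)^2"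
proof -
  assume D: "D \<noteq> 0"
  have n: "(Re D)^2 + (Im D)^2 \<noteq> 0" using D by (simp add: complex_eq_iff sum_power2_eq_zero_iff)
  show ?thesis unfolding inner_complex_def cmod_power2 using n
    by (simp add: Im_divide field_simps power2_eq_square)
qed

theorem theorem5p4:
  fixes S :: "complex set" and z0 :: complex and r :: real
  assumes "finite S" and "card S > 4"
    and "is_SED S z0 r"
    and "z0 \<notin> S"
    and "pre_regular S"
  shows "\<not> half_disk S z0"
proof
  assume hd: "half_disk S z0"
  note fin = assms(1) and c4 = assms(2) and sed = assms(3) and z0S = assms(4)
  obtain c \<rho> th where rho: "\<rho> > 0" and pr: "\<forall>k < card S. (card (S \<inter> reg_edge (card S) c \<rho> th k) = 2 \<and> S \<inter> reg_edge_int (card S) c \<rho> th (Suc k mod card S) = {}) \<or>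
          (card (S \<inter> reg_edge (card S) c \<rho> th (Suc k mod card S)) = 2 \<and> S \<inter> reg_edge_int (card S) c \<rho> th k = {})"
    using assms(5) unfolding pre_regular_def Let_def by blast
  have P0: "prp (card S) c \<rho> th S" by (rule prp_of_pre_regular[OF fin c4 rho pr])
  obtain u where u: "u \<noteq> 0" and xor: "(S \<inter> {x. inner (x - z0) u > 0} = {}) \<noteq> (S \<inter> {x. inner (x - z0) u < 0} = {})"
    using hd unfolding half_disk_def by blast
  define u' where "u' = (if S \<inter> {x. inner (x - z0) u > 0} = {} then u else - u)"
  have u'0: "u' \<noteq> 0" using u by (simp add: u'_def)
  have half: "inner (s - z0) u' \<le> 0" if "s \<in> S" for s
  proof (cases "S \<inter> {x. inner (x - z0) u > 0} = {}")
    case True then show ?thesis using that by (auto simp: u'_def not_less)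
  next
    case False
    then have "S \<inter> {x. inner (x - z0) u < 0} = {}" using xor by simp
    then show ?thesis using that False by (auto simp: u'_def not_less)
  qed
  have ne: "S \<noteq> {}" using c4 by auto
  obtain a where r0: "r > 0" and a: "a \<in> S" "2*z0 - a \<in> S" "inner (a - z0) u' = 0" "cmod (a - z0) = r"
    using sed_pair[OF fin ne sed z0S u'0 half] by blast
  define D where "D = 2 * (z0 - a)"
  have D0: "D \<noteq> 0" using a(4) r0 unfolding D_def by auto
  have "cmod D = cmod (2::complex) * cmod (z0 - a)" unfolding D_def by (rule norm_mult)
  then have nD: "cmod D = 2 * r" using a(4) by (simp add: norm_minus_commute)
  have hD: "D = 2 *\<^sub>R (z0 - a)" by (simp add: D_def scaleR_conv_of_real)
  have "inner u' D = 2 * inner u' (z0 - a)" unfolding hD by (rule inner_scaleR_right)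
  also have "inner u' (z0 - a) = - inner (a - z0) u'"
    by (metis inner_commute inner_minus_left minus_diff_eq)
  finally have "inner u' D = - 2 * inner (a - z0) u'" by simp
  then have "inner u' D = 0" using a(3) by simp
  then obtain \<kappa> where uk: "u' = complex_of_real \<kappa> * (\<i> * D)" using perp_form[OF _ D0] by blast
  have k0: "\<kappa> \<noteq> 0" using uk u'0 by auto
  define D' where "D' = (if \<kappa> > 0 then D else - D)"
  have D'0: "D' \<noteq> 0" using D0 by (simp add: D'_def)
  have nD': "cmod D' = 2 * r" using nD by (simp add: D'_def)
  define \<alpha> where "\<alpha> = 1 / D'"
  define \<beta> where "\<beta> = - z0 / D'"
  have al0: "\<alpha> \<noteq> 0" using D'0 by (simp add: \<alpha>_def)
  have T: "\<alpha> * x + \<beta> = (x - z0) / D'" for x by (simp add: \<alpha>_def \<beta>_def diff_divide_distrib)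
  define S' where "S' = (\<lambda>x. \<alpha> * x + \<beta>) ` S"
  have P1: "prp (card S) (\<alpha> * c + \<beta>) (\<rho> * cmod \<alpha>) (th + Arg \<alpha>) S'"
    unfolding S'_def by (rule prp_affine[OF P0 al0])
  have Ta: "(a - z0) / D = -(1/2)" unfolding D_def using D0 D_def
    by (simp add: field_simps)
  have Tb: "(2*z0 - a - z0) / D = 1/2" unfolding D_def using D0 D_def
    by (simp add: field_simps)
  have pm: "-(1/2) \<in> S' \<and> 1/2 \<in> S'"
  proof (cases "\<kappa> > 0")
    case True
    then have "\<alpha> * a + \<beta> = -(1/2)" "\<alpha> * (2*z0 - a) + \<beta> = 1/2" unfolding T D'_def using Ta Tb by simp_all
    then show ?thesis unfolding S'_def using a by (metis image_eqI)
  next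
    case False
    then have "\<alpha> * a + \<beta> = 1/2" "\<alpha> * (2*z0 - a) + \<beta> = -(1/2)" unfolding T D'_def using Ta Tb
      by (simp_all add: divide_minus_right)
    then show ?thesis unfolding S'_def using a by (metis image_eqI)
  qed
  have ball: "cmod s' \<le> 1/2" if s'S: "s' \<in> S'" for s'
  proof -
    obtain s where s: "s \<in> S" "s' = (s - z0) / D'" using s'S unfolding S'_def T by blast
    have "cmod (s - z0) \<le> r" using sed s(1) unfolding is_SED_def by (auto simp: dist_norm norm_minus_commute)
    then show ?thesis unfolding s(2) norm_divide nD' using r0 by (simp add: field_simps)
  qed
  have low: "Im s' \<le> 0" if s'S: "s' \<in> S'" for s'
  proof -
    obtain s where s: "s \<in> S" "s' = (s - z0) / D'" using s'S unfolding S'_def T by blast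
    have e1: "inner (s - z0) u' = \<kappa> * inner (s - z0) (\<i> * D)"
      unfolding uk scaleR_conv_of_real[symmetric] by (rule inner_scaleR_right)
    have "\<kappa> * (Im ((s - z0) / D) * (cmod D)^2) \<le> 0"
      using half[OF s(1)] unfolding e1 inner_iD[OF D0] .
    then have "\<kappa> * Im ((s - z0) / D) * (cmod D)^2 \<le> 0 * (cmod D)^2" by (simp add: mult.assoc)
    moreover have c2: "(cmod D)^2 > 0" using D0 by simp
    ultimately have h: "\<kappa> * Im ((s - z0) / D) \<le> 0" using mult_le_cancel_right_pos[OF c2] by blast
    show ?thesis
    proof (cases "\<kappa> > 0")
      case True then show ?thesis using h unfolding s(2) D'_def by (simp add: mult_le_0_iff)
    next
      case False then have "\<kappa> < 0" using k0 by simp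
      then show ?thesis using h unfolding s(2) D'_def by (simp add: mult_le_0_iff divide_minus_right)
    qed
  qed
  interpret core_ctx "card S" "\<alpha> * c + \<beta>" "\<rho> * cmod \<alpha>" "th + Arg \<alpha>" S'
    by (rule core_ctx.intro[OF P1]) (unfold_locales, use pm ball low in auto)
  show False by (rule core_false)
qed


end
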